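(* Consider the online linear regression problem with delayed labels described in the context, and assume $\|z_t\|_2\le Z$ and $|y_t|\le Y$ for all $t\in[T]$, for some $Y,Z\ge0$. Let $0<\eta_0\le\eta_1\le\dots\le\eta_T$. Consider the learner (delayed Vovk–Azoury–Warmuth forecaster with clipping): set $\rho_1=0$; at each round $t$, after observing $z_t$, compute $$x_t=\arg\min_{x\in\mathbb{R}^n}\ \sum_{\tau\in o_t}-y_\tau\langle z_\tau,x\rangle+\frac{\eta_t}{2}\|x\|_2^2+\frac12\sum_{\tau=1}^{t}\langle z_\tau,x\rangle^2,$$ play $\tilde x_t=x_t\cdot\min\left\{\frac{\rho_t}{|\langle z_t,x_t\rangle|},1\right\}$ (with $\tilde x_t=x_t$ if $\langle z_t,x_t\rangle=0$), then receive $y_\tau$ for all $\tau\in o_{t+1}\setminus o_t$ and set $\rho_{t+1}=\max_{\tau\in o_{t+1}}|y_\tau|$ (with $\max\emptyset=0$). Then for every $u\in\mathbb{R}^n$, $$\mathrm{Reg}_T(u)\le\frac{\eta_T}{2}\|u\|_2^2+nY^2\ln\left(1+\frac{Z^2T}{\eta_0 n}\right)+\mathcal{O}\left(Y^2\left(\sigma_{\max}+\min\{M_1,M_2\}\right)\right),$$ where $M_1=n\,d_{\max}\ln\left(1+\frac{Z^2T}{\eta_0 n}\right)$ and $M_2=Z^2\sum_{t=1}^T\frac{|m_t|}{\eta_t}$, and $\mathcal{O}$ hides only an absolute numerical constant.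
   Context: Online linear regression with delayed labels: $T\ge1$, $n\ge1$ integers, $[T]=\{1,\dots,T\}$. At each round $t\in[T]$ the learner first observes a feature vector $z_t\in\mathbb{R}^n$, then plays a point $\tilde x_t\in\mathbb{R}^n$ (unconstrained) and incurs the loss $f_t(\tilde x_t)$ where $f_t(x)=\frac12(\langle z_t,x\rangle-y_t)^2$ for a label $y_t\in\mathbb{R}$; the label $y_t$ is revealed only at the end of round $t+d_t$, where $d_t\in\{0,1,2,\dots\}$ is an arbitrary delay unknown to the learner, with $t+d_t\le T$ for all $t$. For $t\ge1$ define $o_t=\{\tau\in\mathbb{N}:\tau+d_\tau<t\}\subseteq[t-1]$ and $m_t=[t-1]\setminus o_t$; $\sigma_{\max}=\max_{t\in[T]}|m_t|$ and $d_{\max}=\max_{t\in[T]}d_t$. The regret against $u\in\mathbb{R}^n$ is $\mathrm{Reg}_T(u)=\sum_{t=1}^T(f_t(\tilde x_t)-f_t(u))$. The learning rate $\eta_t$ used at round $t$ may depend on the information available at the start of round $t$. *)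

theory Defs
  imports Complex_Main
begin

text \<open>Vectors of R^n are represented as functions nat => real; only the
components i < n are relevant (inner product and norm sum over i < n).\<close>

definition vinner :: "nat \<Rightarrow> (nat \<Rightarrow> real) \<Rightarrow> (nat \<Rightarrow> real) \<Rightarrow> real" where
  "vinner n a b = (\<Sum>i<n. a i * b i)"

definition vnorm :: "nat \<Rightarrow> (nat \<Rightarrow> real) \<Rightarrow> real" where
  "vnorm n a = sqrt (\<Sum>i<n. (a i)\<^sup>2)"

definition in_Rn :: "nat \<Rightarrow> (nat \<Rightarrow> real) \<Rightarrow> bool" where
  "in_Rn n x \<longleftrightarrow> (\<forall>i\<ge>n. x i = 0)"

definition sqloss :: "nat \<Rightarrow> (nat \<Rightarrow> nat \<Rightarrow> real) \<Rightarrow> (nat \<Rightarrow> real) \<Rightarrow> nat \<Rightarrow> (nat \<Rightarrow> real) \<Rightarrow> real" where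
  "sqloss n z y t x = (vinner n (z t) x - y t)\<^sup>2 / 2"

definition obs :: "(nat \<Rightarrow> nat) \<Rightarrow> nat \<Rightarrow> nat set" where
  "obs d t = {\<tau>. 1 \<le> \<tau> \<and> \<tau> + d \<tau> < t}"

definition miss :: "(nat \<Rightarrow> nat) \<Rightarrow> nat \<Rightarrow> nat set" where
  "miss d t = {1..t-1} - obs d t"

definition sigma_max :: "nat \<Rightarrow> (nat \<Rightarrow> nat) \<Rightarrow> nat" where
  "sigma_max T d = Max ((\<lambda>t. card (miss d t)) ` {1..T})"

definition d_max :: "nat \<Rightarrow> (nat \<Rightarrow> nat) \<Rightarrow> nat" where
  "d_max T d = Max (d ` {1..T})"

definition vaw_obj :: "nat \<Rightarrow> (nat \<Rightarrow> nat \<Rightarrow> real) \<Rightarrow> (nat \<Rightarrow> real) \<Rightarrow> (nat \<Rightarrow> nat)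
     \<Rightarrow> (nat \<Rightarrow> real) \<Rightarrow> nat \<Rightarrow> (nat \<Rightarrow> real) \<Rightarrow> real" where
  "vaw_obj n z y d \<eta> t x =
     (\<Sum>\<tau>\<in>obs d t. - y \<tau> * vinner n (z \<tau>) x) + \<eta> t / 2 * (vnorm n x)\<^sup>2
     + (\<Sum>\<tau>=1..t. (vinner n (z \<tau>) x)\<^sup>2) / 2"

definition vaw_x :: "nat \<Rightarrow> (nat \<Rightarrow> nat \<Rightarrow> real) \<Rightarrow> (nat \<Rightarrow> real) \<Rightarrow> (nat \<Rightarrow> nat)
     \<Rightarrow> (nat \<Rightarrow> real) \<Rightarrow> nat \<Rightarrow> (nat \<Rightarrow> real)" where
  "vaw_x n z y d \<eta> t = (THE x. in_Rn n x \<and>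
      (\<forall>x'. in_Rn n x' \<longrightarrow> vaw_obj n z y d \<eta> t x \<le> vaw_obj n z y d \<eta> t x'))"

text \<open>Clipping threshold rho_t = max_{tau in o_t} |y_tau| (max of empty set = 0);
  this gives rho_1 = 0 and rho_{t+1} = max_{tau in o_{t+1}} |y_tau|.\<close>
definition rho :: "(nat \<Rightarrow> real) \<Rightarrow> (nat \<Rightarrow> nat) \<Rightarrow> nat \<Rightarrow> real" where
  "rho y d t = (if obs d t = {} then 0 else Max ((\<lambda>\<tau>. \<bar>y \<tau>\<bar>) ` obs d t))"

definition vaw_play :: "nat \<Rightarrow> (nat \<Rightarrow> nat \<Rightarrow> real) \<Rightarrow> (nat \<Rightarrow> real) \<Rightarrow> (nat \<Rightarrow> nat)
     \<Rightarrow> (nat \<Rightarrow> real) \<Rightarrow> nat \<Rightarrow> (nat \<Rightarrow> real)" where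
  "vaw_play n z y d \<eta> t =
     (let x = vaw_x n z y d \<eta> t; p = vinner n (z t) x in
      if p = 0 then x else (\<lambda>i. min (rho y d t / \<bar>p\<bar>) 1 * x i))"

definition regret :: "nat \<Rightarrow> nat \<Rightarrow> (nat \<Rightarrow> nat \<Rightarrow> real) \<Rightarrow> (nat \<Rightarrow> real) \<Rightarrow> (nat \<Rightarrow> nat)
     \<Rightarrow> (nat \<Rightarrow> real) \<Rightarrow> (nat \<Rightarrow> real) \<Rightarrow> real" where
  "regret n T z y d \<eta> u =
     (\<Sum>t=1..T. sqloss n z y t (vaw_play n z y d \<eta> t) - sqloss n z y t u)"

end

theory Submission
  imports Defs "HOL-Analysis.Analysis"
begin

lemma vinner_sym: "vinner n a b = vinner n b a"
  unfolding vinner_def by (simp add: mult.commute)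
lemma vinner_add_right: "vinner n a (\<lambda>i. x i + y i) = vinner n a x + vinner n a y"
  unfolding vinner_def by (simp add: distrib_left sum.distrib)
lemma vinner_add_left: "vinner n (\<lambda>i. x i + y i) a = vinner n x a + vinner n y a"
  unfolding vinner_def by (simp add: distrib_right sum.distrib)
lemma vinner_diff_right: "vinner n a (\<lambda>i. x i - y i) = vinner n a x - vinner n a y"
  unfolding vinner_def by (simp add: right_diff_distrib sum_subtractf)
lemma vinner_diff_left: "vinner n (\<lambda>i. x i - y i) a = vinner n x a - vinner n y a"
  unfolding vinner_def by (simp add: left_diff_distrib sum_subtractf)
lemma vinner_scale_right: "vinner n a (\<lambda>i. r * x i) = r * vinner n a x"
  unfolding vinner_def by (simp add: sum_distrib_left algebra_simps)
lemma vinner_scale_left: "vinner n (\<lambda>i. r * x i) a = r * vinner n x a"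
  unfolding vinner_def by (simp add: sum_distrib_left algebra_simps)
lemma vinner_sum_right: "vinner n a (\<lambda>i. \<Sum>s\<in>S. f s i) = (\<Sum>s\<in>S. vinner n a (f s))"
  unfolding vinner_def by (simp add: sum_distrib_left sum.swap[of _ S])
lemma vinner_zero_right[simp]: "vinner n a (\<lambda>i. 0) = 0"
  unfolding vinner_def by simp
lemma vinner_self_nonneg: "0 \<le> vinner n a a"
  unfolding vinner_def by (simp add: sum_nonneg)
lemma vinner_self_eq0: "vinner n a a = 0 \<Longrightarrow> i < n \<Longrightarrow> a i = 0"
  unfolding vinner_def
  by (metis (no_types, lifting) finite_lessThan lessThan_iff mult_eq_0_iff sum_nonneg_eq_0_iff zero_le_square)
lemma vnorm_sq: "(vnorm n a)\<^sup>2 = vinner n a a"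
  unfolding vnorm_def vinner_def by (simp add: sum_nonneg power2_eq_square)
lemma vinner_Suc: "vinner (Suc k) a b = vinner k a b + a k * b k"
  unfolding vinner_def by simp
lemma vinner_Suc_Rn: "in_Rn k b \<Longrightarrow> vinner (Suc k) a b = vinner k a b"
  unfolding vinner_def in_Rn_def by simp
lemma vinner_Suc_Rn': "in_Rn k b \<Longrightarrow> vinner (Suc k) b a = vinner k b a"
  unfolding vinner_def in_Rn_def by simp
lemma vinner_0[simp]: "vinner 0 a b = 0"
  unfolding vinner_def by simp

definition Bf :: "nat \<Rightarrow> real \<Rightarrow> (nat \<Rightarrow> nat \<Rightarrow> real) \<Rightarrow> nat set \<Rightarrow> (nat \<Rightarrow> real) \<Rightarrow> (nat \<Rightarrow> real) \<Rightarrow> real" where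
  "Bf n e z S x y = e * vinner n x y + (\<Sum>s\<in>S. vinner n (z s) x * vinner n (z s) y)"

lemma Bf_sym: "Bf n e z S x y = Bf n e z S y x"
  unfolding Bf_def by (simp add: vinner_sym mult.commute)
lemma Bf_add_right: "Bf n e z S a (\<lambda>i. x i + y i) = Bf n e z S a x + Bf n e z S a y"
  unfolding Bf_def by (simp add: vinner_add_right algebra_simps sum.distrib)
lemma Bf_add_left: "Bf n e z S (\<lambda>i. x i + y i) a = Bf n e z S x a + Bf n e z S y a"
  unfolding Bf_def by (simp add: vinner_add_left vinner_add_right algebra_simps sum.distrib)
lemma Bf_diff_right: "Bf n e z S a (\<lambda>i. x i - y i) = Bf n e z S a x - Bf n e z S a y"
  unfolding Bf_def by (simp add: vinner_diff_right algebra_simps sum_subtractf)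
lemma Bf_diff_left: "Bf n e z S (\<lambda>i. x i - y i) a = Bf n e z S x a - Bf n e z S y a"
  unfolding Bf_def by (simp add: vinner_diff_left vinner_diff_right algebra_simps sum_subtractf)
lemma Bf_scale_right: "Bf n e z S a (\<lambda>i. r * x i) = r * Bf n e z S a x"
  unfolding Bf_def by (simp add: vinner_scale_right algebra_simps sum_distrib_left)
lemma Bf_scale_left: "Bf n e z S (\<lambda>i. r * x i) a = r * Bf n e z S x a"
  unfolding Bf_def by (simp add: vinner_scale_left vinner_scale_right algebra_simps sum_distrib_left)
lemma Bf_insert: "finite S \<Longrightarrow> s \<notin> S \<Longrightarrow>
   Bf n e z (insert s S) x y = Bf n e z S x y + vinner n (z s) x * vinner n (z s) y"
  unfolding Bf_def by simp
lemma Bf_self_ge: "0 \<le> e \<Longrightarrow> e * vinner n x x \<le> Bf n e z S x x"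
  unfolding Bf_def by (simp add: sum_nonneg)
lemma Bf_self_nonneg: "0 \<le> e \<Longrightarrow> 0 \<le> Bf n e z S x x"
  by (meson Bf_self_ge mult_nonneg_nonneg order_trans vinner_self_nonneg)
lemma Bf_mono_e: "e \<le> e' \<Longrightarrow> Bf n e z S x x \<le> Bf n e' z S x x"
  unfolding Bf_def by (simp add: mult_right_mono vinner_self_nonneg)
lemma Bf_mono_S: "finite S' \<Longrightarrow> S \<subseteq> S' \<Longrightarrow> Bf n e z S x x \<le> Bf n e z S' x x"
  unfolding Bf_def by (simp add: sum_mono2 )

definition solves :: "nat \<Rightarrow> real \<Rightarrow> (nat \<Rightarrow> nat \<Rightarrow> real) \<Rightarrow> nat set \<Rightarrow> (nat \<Rightarrow> real) \<Rightarrow> (nat \<Rightarrow> real) \<Rightarrow> bool" where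
  "solves n e z S c x \<longleftrightarrow> in_Rn n x \<and> (\<forall>y. Bf n e z S x y = vinner n c y)"

lemma solves_exists:
  assumes "finite S" "0 < e"
  shows "\<exists>x. solves n e z S c x"
  using assms(1)
proof (induction S arbitrary: c rule: finite_induct)
  case empty
  define x where "x = (\<lambda>i. if i < n then c i / e else 0)"
  have "in_Rn n x" unfolding x_def in_Rn_def by simp
  moreover have "Bf n e z {} x y = vinner n c y" for y
    using assms(2) unfolding Bf_def vinner_def x_def by (simp add: sum_distrib_left)
  ultimately show ?case unfolding solves_def by blast
next
  case (insert s S)
  obtain x where x: "solves n e z S c x" using insert.IH by blast
  obtain u where u: "solves n e z S (z s) u" using insert.IH by blast
  define w where "w = vinner n (z s) u"
  have w0: "0 \<le> w" using u assms(2) unfolding w_def solves_def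
    by (metis Bf_self_nonneg less_imp_le)
  define k where "k = vinner n (z s) x / (1 + w)"
  define x' where "x' = (\<lambda>i. x i - k * u i)"
  have "in_Rn n x'" using x u unfolding x'_def solves_def in_Rn_def by simp
  moreover have "Bf n e z (insert s S) x' y = vinner n c y" for y
  proof -
    have "Bf n e z (insert s S) x' y = Bf n e z S x' y + vinner n (z s) x' * vinner n (z s) y"
      using insert by (simp add: Bf_insert)
    also have "Bf n e z S x' y = vinner n c y - k * vinner n (z s) y"
      using x u unfolding x'_def solves_def by (simp add: Bf_diff_left Bf_scale_left)
    also have "vinner n (z s) x' = vinner n (z s) x - k * w"
      unfolding x'_def w_def by (simp add: vinner_diff_right vinner_scale_right)
    also have "vinner n (z s) x - k * w = k"
      unfolding k_def using w0 by (simp add: field_simps)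
    finally show ?thesis by simp
  qed
  ultimately show ?case unfolding solves_def by blast
qed


definition sol :: "nat \<Rightarrow> real \<Rightarrow> (nat \<Rightarrow> nat \<Rightarrow> real) \<Rightarrow> nat set \<Rightarrow> (nat \<Rightarrow> real) \<Rightarrow> (nat \<Rightarrow> real)" where
  "sol n e z S c = (SOME x. solves n e z S c x)"

lemma sol: "finite S \<Longrightarrow> 0 < e \<Longrightarrow> solves n e z S c (sol n e z S c)"
  unfolding sol_def using solves_exists by (metis someI_ex)

lemma Bf_sq_diff: "Bf n e z S (\<lambda>i. y i - x i) (\<lambda>i. y i - x i) = Bf n e z S y y - 2 * Bf n e z S x y + Bf n e z S x x"
  by (simp add: Bf_diff_left Bf_diff_right Bf_sym[of n e z S y x])

lemma Bf_sq_add: "Bf n e z S (\<lambda>i. y i + x i) (\<lambda>i. y i + x i) = Bf n e z S y y + 2 * Bf n e z S x y + Bf n e z S x x"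
  by (simp add: Bf_add_left Bf_add_right Bf_sym[of n e z S y x])

lemma solves_self: "solves n e z S c x \<Longrightarrow> Bf n e z S x x = vinner n c x"
  unfolding solves_def by blast

lemma solves_val: "solves n e z S c x \<Longrightarrow> solves n e z S c x' \<Longrightarrow> vinner n c x = vinner n c x'"
  unfolding solves_def by (metis Bf_sym)

lemma solves_var:
  assumes "solves n e z S c x" "0 \<le> e"
  shows "2 * vinner n c y - Bf n e z S y y \<le> vinner n c x"
proof -
  have "0 \<le> Bf n e z S (\<lambda>i. y i - x i) (\<lambda>i. y i - x i)" using Bf_self_nonneg assms(2) by blast
  also have "\<dots> = Bf n e z S y y - 2 * vinner n c y + vinner n c x"
    using assms(1) unfolding Bf_sq_diff solves_def by simp
  finally show ?thesis by simp
qed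

lemma solves_min:
  assumes "solves n e z S c x" "0 \<le> e"
  shows "Bf n e z S x x / 2 - vinner n c x \<le> Bf n e z S y y / 2 - vinner n c y"
  using solves_var[OF assms, of y] solves_self[OF assms(1)] by simp

lemma quad_disc:
  fixes A B C :: real
  assumes "\<And>l. 0 \<le> A + 2 * l * B + l^2 * C" "0 \<le> C" "0 \<le> A"
  shows "B^2 \<le> A * C"
proof (cases "C = 0")
  case True
  have "B = 0"
  proof (rule ccontr)
    assume "B \<noteq> 0"
    have "0 \<le> A + 2 * (- (A + 1) / (2 * B)) * B" using assms(1)[of "- (A + 1) / (2 * B)"] True by simp
    also have "\<dots> = -1" using \<open>B \<noteq> 0\<close> by (simp add: field_simps)
    finally show False by simp
  qed
  then show ?thesis using assms by simp
next
  case False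
  then have C: "C > 0" using assms(2) by simp
  have "0 \<le> A + 2 * (- B / C) * B + (- B / C)^2 * C" by (rule assms(1))
  also have "\<dots> = A - B^2 / C" using C by (simp add: field_simps power2_eq_square)
  finally have "B^2 / C \<le> A" by simp
  then show ?thesis using C by (simp add: field_simps)
qed

lemma Bf_CS:
  assumes "0 \<le> e"
  shows "(Bf n e z S a b)^2 \<le> Bf n e z S a a * Bf n e z S b b"
proof (rule quad_disc)
  fix l
  have "0 \<le> Bf n e z S (\<lambda>i. a i + l * b i) (\<lambda>i. a i + l * b i)" using Bf_self_nonneg assms by blast
  also have "\<dots> = Bf n e z S a a + 2 * l * Bf n e z S a b + l^2 * Bf n e z S b b"
    by (simp add: Bf_add_left Bf_add_right Bf_scale_left Bf_scale_right Bf_sym[of n e z S b a] power2_eq_square algebra_simps)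
  finally show "0 \<le> Bf n e z S a a + 2 * l * Bf n e z S a b + l^2 * Bf n e z S b b" .
qed (use Bf_self_nonneg assms in auto)

lemma Bf_abs_le:
  assumes "0 \<le> e"
  shows "2 * \<bar>Bf n e z S a b\<bar> \<le> Bf n e z S a a + Bf n e z S b b"
proof -
  have "0 \<le> Bf n e z S (\<lambda>i. a i - b i) (\<lambda>i. a i - b i)" "0 \<le> Bf n e z S (\<lambda>i. a i + b i) (\<lambda>i. a i + b i)"
    using Bf_self_nonneg assms by blast+
  then show ?thesis unfolding Bf_sq_diff Bf_sq_add by (simp add: Bf_sym[of n e z S a b])
qed

definition wv :: "nat \<Rightarrow> real \<Rightarrow> (nat \<Rightarrow> nat \<Rightarrow> real) \<Rightarrow> nat set \<Rightarrow> (nat \<Rightarrow> real) \<Rightarrow> real" where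
  "wv n e z S v = vinner n v (sol n e z S v)"

lemma wv_eq: "finite S \<Longrightarrow> 0 < e \<Longrightarrow> solves n e z S v x \<Longrightarrow> wv n e z S v = vinner n v x"
  unfolding wv_def by (metis sol solves_val)

lemma wv_eq_Bf: "finite S \<Longrightarrow> 0 < e \<Longrightarrow> solves n e z S v x \<Longrightarrow> wv n e z S v = Bf n e z S x x"
  using wv_eq solves_self by metis

lemma wv_nonneg: "finite S \<Longrightarrow> 0 < e \<Longrightarrow> 0 \<le> wv n e z S v"
  using wv_eq_Bf[OF _ _ sol] Bf_self_nonneg by (metis less_imp_le)

lemma wv_mono:
  assumes "finite S'" "S \<subseteq> S'" "0 < e" "e \<le> e'"
  shows "wv n e' z S' v \<le> wv n e z S v"
proof -
  have S: "finite S" using assms(1,2) finite_subset by blast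
  have e': "0 < e'" using assms by simp
  let ?x = "sol n e' z S' v"
  have sx: "solves n e' z S' v ?x" using sol[OF assms(1) e'] .
  have "wv n e' z S' v = 2 * vinner n v ?x - Bf n e' z S' ?x ?x"
    using wv_eq[OF assms(1) e' sx] solves_self[OF sx] by simp
  also have "\<dots> \<le> 2 * vinner n v ?x - Bf n e z S ?x ?x"
    using Bf_mono_e[OF assms(4), of n z S ?x] Bf_mono_S[OF assms(1,2), of n e' z ?x] by simp
  also have "\<dots> \<le> wv n e z S v"
    using solves_var[OF sol[OF S assms(3), of n z v], where y= ?x] assms(3) wv_eq[OF S assms(3) sol[OF S assms(3), of n z v]] by simp
  finally show ?thesis .
qed

lemma wv_le_norm:
  assumes "finite S" "0 < e"
  shows "wv n e z S v \<le> vinner n v v / e"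
proof -
  let ?x = "sol n e z S v"
  have sx: "solves n e z S v ?x" using sol[OF assms] .
  have w: "wv n e z S v = 2 * vinner n v ?x - Bf n e z S ?x ?x"
    using wv_eq[OF assms sx] solves_self[OF sx] by simp
  have "0 \<le> vinner n (\<lambda>i. e * ?x i - v i) (\<lambda>i. e * ?x i - v i)" by (rule vinner_self_nonneg)
  also have "\<dots> = e * e * vinner n ?x ?x - 2 * e * vinner n v ?x + vinner n v v"
    by (simp add: vinner_diff_left vinner_diff_right vinner_scale_left vinner_scale_right vinner_sym[of n ?x v] algebra_simps)
  finally have "2 * vinner n v ?x - e * vinner n ?x ?x \<le> vinner n v v / e"
    using assms(2) by (simp add: field_simps)
  moreover have "e * vinner n ?x ?x \<le> Bf n e z S ?x ?x" using Bf_self_ge assms(2) by simp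
  ultimately show ?thesis using w by simp
qed


lemma vinner_zero_left[simp]: "vinner n (\<lambda>i. 0) a = 0"
  unfolding vinner_def by simp

lemma Bf_zero_left: "Bf n e z S (\<lambda>i. 0) y = 0"
  unfolding Bf_def by simp

lemma Bf_Suc_Rn: "in_Rn k x \<Longrightarrow> in_Rn k y \<Longrightarrow> Bf (Suc k) e z S x y = Bf k e z S x y"
  unfolding Bf_def by (simp add: vinner_Suc_Rn)

definition ek :: "nat \<Rightarrow> nat \<Rightarrow> real" where "ek k = (\<lambda>i. if i = k then 1 else 0)"

lemma vinner_ek: "vinner (Suc k) (ek k) y = y k"
  unfolding vinner_def ek_def by (simp add: if_distrib cong: if_cong)
lemma vinner_ek': "vinner (Suc k) y (ek k) = y k"
  using vinner_ek vinner_sym by metis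
lemma ek_k[simp]: "ek k k = 1" unfolding ek_def by simp

definition piv :: "nat \<Rightarrow> real \<Rightarrow> (nat \<Rightarrow> nat \<Rightarrow> real) \<Rightarrow> nat set \<Rightarrow> nat \<Rightarrow> real" where
  "piv k e z S = (\<lambda>i. sol (Suc k) e z S (ek k) i / sol (Suc k) e z S (ek k) k)"

lemma in_Rn_zero: "in_Rn n x \<Longrightarrow> (\<forall>i<n. x i = 0) \<Longrightarrow> x = (\<lambda>i. 0)"
  unfolding in_Rn_def by (metis not_le)

lemma sol_ek_pos:
  assumes "finite S" "0 < e"
  shows "0 < sol (Suc k) e z S (ek k) k"
proof -
  let ?s = "sol (Suc k) e z S (ek k)"
  have ss: "solves (Suc k) e z S (ek k) ?s" using sol[OF assms] .
  have "Bf (Suc k) e z S ?s ?s = ?s k" using solves_self[OF ss] vinner_ek by simp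
  show ?thesis
  proof (rule ccontr)
    assume "\<not> 0 < ?s k"
    then have "e * vinner (Suc k) ?s ?s \<le> 0"
      using Bf_self_ge[of e "Suc k" ?s z S] assms \<open>Bf (Suc k) e z S ?s ?s = ?s k\<close> by simp
    then have "vinner (Suc k) ?s ?s = 0" using assms(2) vinner_self_nonneg
      by (metis antisym mult_le_0_iff not_less)
    then have "?s = (\<lambda>i. 0)" using in_Rn_zero vinner_self_eq0 ss unfolding solves_def by metis
    then have "Bf (Suc k) e z S ?s (ek k) = 0" by (simp add: Bf_zero_left)
    moreover have "Bf (Suc k) e z S ?s (ek k) = 1" using ss unfolding solves_def by (simp add: vinner_ek)
    ultimately show False by simp
  qed
qed

lemma piv_props:
  assumes "finite S" "0 < e"
  shows "in_Rn (Suc k) (piv k e z S)" "piv k e z S k = 1"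
    "\<And>y. in_Rn k y \<Longrightarrow> Bf (Suc k) e z S (piv k e z S) y = 0"
    "Bf (Suc k) e z S (piv k e z S) (piv k e z S) = 1 / sol (Suc k) e z S (ek k) k"
proof -
  let ?s = "sol (Suc k) e z S (ek k)"
  have ss: "solves (Suc k) e z S (ek k) ?s" using sol[OF assms] .
  have pos: "0 < ?s k" using sol_ek_pos[OF assms] .
  have pe: "piv k e z S = (\<lambda>i. (1 / ?s k) * ?s i)" unfolding piv_def by auto
  show "in_Rn (Suc k) (piv k e z S)" using ss unfolding solves_def in_Rn_def piv_def by simp
  show "piv k e z S k = 1" unfolding piv_def using pos by simp
  show "Bf (Suc k) e z S (piv k e z S) y = 0" if "in_Rn k y" for y
    unfolding pe Bf_scale_left using ss that unfolding solves_def in_Rn_def by (simp add: vinner_ek)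
  show "Bf (Suc k) e z S (piv k e z S) (piv k e z S) = 1 / ?s k"
    unfolding pe Bf_scale_left Bf_scale_right using solves_self[OF ss] pos by (simp add: vinner_ek)
qed

lemma piv_min:
  assumes "finite S" "0 < e" "in_Rn (Suc k) x" "x k = 1"
  shows "Bf (Suc k) e z S (piv k e z S) (piv k e z S) \<le> Bf (Suc k) e z S x x"
proof -
  let ?p = "piv k e z S"
  define d where "d = (\<lambda>i. x i - ?p i)"
  have dR: "in_Rn k d" using piv_props(1,2)[OF assms(1,2), of k z] assms(3,4) unfolding d_def in_Rn_def
    by (metis diff_self le_eq_less_or_eq less_eq_Suc_le)
  have x: "x = (\<lambda>i. ?p i + d i)" unfolding d_def by simp
  have "Bf (Suc k) e z S x x = Bf (Suc k) e z S ?p ?p + 2 * Bf (Suc k) e z S d ?p + Bf (Suc k) e z S d d"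
    by (subst x, subst x, rule Bf_sq_add)
  moreover have "Bf (Suc k) e z S d ?p = 0" using piv_props(3)[OF assms(1,2) dR] Bf_sym by metis
  moreover have "0 \<le> Bf (Suc k) e z S d d" using Bf_self_nonneg assms(2) by simp
  ultimately show ?thesis by simp
qed

lemma piv_lower:
  assumes "finite S" "0 < e"
  shows "e \<le> Bf (Suc k) e z S (piv k e z S) (piv k e z S)"
proof -
  let ?p = "piv k e z S"
  have "1 \<le> vinner (Suc k) ?p ?p" using piv_props(2)[OF assms] vinner_Suc[of k ?p ?p] vinner_self_nonneg[of k ?p] by simp
  then have "e \<le> e * vinner (Suc k) ?p ?p" using assms(2) by simp
  also have "\<dots> \<le> Bf (Suc k) e z S ?p ?p" using Bf_self_ge assms(2) by simp
  finally show ?thesis .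
qed

lemma piv_upper:
  assumes "finite S" "0 < e"
  shows "Bf (Suc k) e z S (piv k e z S) (piv k e z S) \<le> e + (\<Sum>s\<in>S. (z s k)^2)"
proof -
  have "in_Rn (Suc k) (ek k)" unfolding in_Rn_def ek_def by simp
  moreover have "ek k k = 1" unfolding ek_def by simp
  ultimately have "Bf (Suc k) e z S (piv k e z S) (piv k e z S) \<le> Bf (Suc k) e z S (ek k) (ek k)"
    using piv_min[OF assms] by blast
  also have "\<dots> = e + (\<Sum>s\<in>S. (z s k)^2)"
    unfolding Bf_def by (simp add: vinner_ek vinner_ek' power2_eq_square)
  finally show ?thesis .
qed

lemma piv_step:
  assumes "finite S" "0 < e" "t \<notin> S"
  shows "Bf (Suc k) e z S (piv k e z S) (piv k e z S) + (vinner (Suc k) (z t) (piv k e z (insert t S)))^2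
     \<le> Bf (Suc k) e z (insert t S) (piv k e z (insert t S)) (piv k e z (insert t S))"
proof -
  let ?p = "piv k e z (insert t S)"
  have "Bf (Suc k) e z S (piv k e z S) (piv k e z S) \<le> Bf (Suc k) e z S ?p ?p"
    using piv_min[OF assms(1,2)] piv_props(1,2)[of "insert t S" e k z] assms by simp
  then show ?thesis using Bf_insert[OF assms(1,3), of "Suc k" e z ?p ?p] by (simp add: power2_eq_square)
qed

lemma wv_decomp:
  assumes "finite S" "0 < e"
  shows "wv (Suc k) e z S v = wv k e z S v
     + (vinner (Suc k) v (piv k e z S))^2 / Bf (Suc k) e z S (piv k e z S) (piv k e z S)"
proof -
  let ?p = "piv k e z S"
  let ?V = "sol (Suc k) e z S v"
  let ?sg = "Bf (Suc k) e z S ?p ?p"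
  have sV: "solves (Suc k) e z S v ?V" using sol[OF assms] .
  have sgpos: "0 < ?sg" using piv_props(4)[OF assms, of k z] sol_ek_pos[OF assms, of k z] by simp
  define a where "a = ?V k"
  define v' where "v' = (\<lambda>i. ?V i - a * ?p i)"
  have v'R: "in_Rn k v'" using sV piv_props(1,2)[OF assms, of k z] unfolding v'_def in_Rn_def solves_def a_def
    by (metis diff_self le_eq_less_or_eq less_eq_Suc_le mult.right_neutral mult_zero_right)
  have v'S: "in_Rn (Suc k) v'" using v'R unfolding in_Rn_def by simp
  have "Bf k e z S v' y' = vinner k v y'" if "in_Rn k y'" for y'
  proof -
    have "Bf k e z S v' y' = Bf (Suc k) e z S v' y'" using Bf_Suc_Rn v'R that by metis
    also have "\<dots> = Bf (Suc k) e z S ?V y' - a * Bf (Suc k) e z S ?p y'"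
      unfolding v'_def by (simp add: Bf_diff_left Bf_scale_left)
    also have "\<dots> = vinner (Suc k) v y'" using sV piv_props(3)[OF assms that] unfolding solves_def by simp
    also have "\<dots> = vinner k v y'" using vinner_Suc_Rn that by metis
    finally show ?thesis .
  qed
  then have sv': "solves k e z S v v'"
  proof -
    assume h: "\<And>y'. in_Rn k y' \<Longrightarrow> Bf k e z S v' y' = vinner k v y'"
    have "Bf k e z S v' y = vinner k v y" for y
    proof -
      define y' where "y' = (\<lambda>i. if i < k then y i else 0)"
      have "in_Rn k y'" unfolding y'_def in_Rn_def by simp
      moreover have "Bf k e z S v' y = Bf k e z S v' y'" "vinner k v y = vinner k v y'"
        unfolding Bf_def vinner_def y'_def by simp_all
      ultimately show ?thesis using h by simp
    qed
    then show ?thesis using v'R unfolding solves_def by simp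
  qed
  have w1: "wv k e z S v = vinner k v v'" using wv_eq[OF assms sv'] .
  have w2: "wv (Suc k) e z S v = vinner (Suc k) v ?V" using wv_eq[OF assms sV] .
  have V: "?V = (\<lambda>i. v' i + a * ?p i)" unfolding v'_def by simp
  have "vinner (Suc k) v ?V = vinner (Suc k) v v' + a * vinner (Suc k) v ?p"
    by (subst V) (simp add: vinner_add_right vinner_scale_right)
  also have "vinner (Suc k) v v' = vinner k v v'" using vinner_Suc_Rn v'R by metis
  finally have w3: "wv (Suc k) e z S v = wv k e z S v + a * vinner (Suc k) v ?p" using w1 w2 by simp
  have "vinner (Suc k) v ?p = Bf (Suc k) e z S ?V ?p" using sV unfolding solves_def by simp
  also have "\<dots> = Bf (Suc k) e z S v' ?p + a * ?sg"
    by (subst V) (simp add: Bf_add_left Bf_scale_left)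
  also have "Bf (Suc k) e z S v' ?p = 0" using piv_props(3)[OF assms v'R] Bf_sym by metis
  finally have "a = vinner (Suc k) v ?p / ?sg" using sgpos by (simp add: field_simps)
  then show ?thesis using w3 by (simp add: power2_eq_square)
qed

lemma telescope: "(\<Sum>t=1..(T::nat). f t - f (t - 1)) = f T - (f 0 :: real)"
  by (induction T) auto

lemma pivot_sum:
  assumes "0 < e"
  shows "(\<Sum>t=1..T. (vinner (Suc k) (z t) (piv k e z {1..t}))^2
           / Bf (Suc k) e z {1..t} (piv k e z {1..t}) (piv k e z {1..t}))
         \<le> ln (1 + (\<Sum>t=1..T. (z t k)^2) / e)"
proof -
  define sg where "sg t = Bf (Suc k) e z {1..t} (piv k e z {1..t}) (piv k e z {1..t})" for t
  have sgpos: "0 < sg t" for t using piv_lower[of "{1..t}" e k z] assms unfolding sg_def by simp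
  have "(vinner (Suc k) (z t) (piv k e z {1..t}))^2 / sg t \<le> ln (sg t) - ln (sg (t - 1))"
    if "t \<in> {1..T}" for t
  proof -
    have t1: "{1..t} = insert t {1..t-1}" "t \<notin> {1..t-1}" using that by auto
    have "sg (t-1) + (vinner (Suc k) (z t) (piv k e z {1..t}))^2 \<le> sg t"
      using piv_step[of "{1..t-1}" e t k z] assms t1 unfolding sg_def by simp
    then have "(vinner (Suc k) (z t) (piv k e z {1..t}))^2 / sg t \<le> 1 - sg (t-1) / sg t"
      using sgpos[of t] by (simp add: field_simps)
    also have "\<dots> \<le> - ln (sg (t-1) / sg t)" using ln_le_minus_one[of "sg (t-1) / sg t"] sgpos by simp
    also have "\<dots> = ln (sg t) - ln (sg (t - 1))"
    proof -
      have "ln (sg (t-1) / sg t) = ln (sg (t-1)) - ln (sg t)" using ln_divide_pos sgpos by metis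
      then show ?thesis by simp
    qed
    finally show ?thesis .
  qed
  then have "(\<Sum>t=1..T. (vinner (Suc k) (z t) (piv k e z {1..t}))^2 / sg t)
       \<le> (\<Sum>t=1..T. ln (sg t) - ln (sg (t - 1)))" by (rule sum_mono)
  also have "\<dots> = ln (sg T) - ln (sg 0)" by (rule telescope)
  also have "\<dots> = ln (sg T / sg 0)" using sgpos by (simp add: ln_divide_pos)
  also have "\<dots> \<le> ln ((e + (\<Sum>t=1..T. (z t k)^2)) / e)"
  proof -
    have "sg T \<le> e + (\<Sum>t=1..T. (z t k)^2)" using piv_upper[of "{1..T}" e k z] assms unfolding sg_def by simp
    moreover have "e \<le> sg 0" using piv_lower[of "{1..0}" e k z] assms unfolding sg_def by simp
    ultimately have "sg T / sg 0 \<le> (e + (\<Sum>t=1..T. (z t k)^2)) / e"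
      using sgpos assms by (meson frac_le less_le_trans order_less_imp_le)
    moreover have "0 < sg T / sg 0" using sgpos by simp
    ultimately show ?thesis by (meson ln_le_cancel_iff less_le_trans)
  qed
  also have "(e + (\<Sum>t=1..T. (z t k)^2)) / e = 1 + (\<Sum>t=1..T. (z t k)^2) / e" using assms by (simp add: field_simps)
  finally show ?thesis unfolding sg_def .
qed

lemma elliptical:
  assumes "0 < e"
  shows "(\<Sum>t=1..T. wv k e z {1..t} (z t)) \<le> (\<Sum>i<k. ln (1 + (\<Sum>t=1..T. (z t i)^2) / e))"
proof (induction k)
  case 0
  have "wv 0 e z {1..t} (z t) = 0" for t unfolding wv_def by simp
  then show ?case by simp
next
  case (Suc k)
  have "(\<Sum>t=1..T. wv (Suc k) e z {1..t} (z t)) = (\<Sum>t=1..T. wv k e z {1..t} (z t))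
      + (\<Sum>t=1..T. (vinner (Suc k) (z t) (piv k e z {1..t}))^2
           / Bf (Suc k) e z {1..t} (piv k e z {1..t}) (piv k e z {1..t}))"
    using wv_decomp[OF _ assms] by (simp add: sum.distrib)
  also have "\<dots> \<le> (\<Sum>i<k. ln (1 + (\<Sum>t=1..T. (z t i)^2) / e)) + ln (1 + (\<Sum>t=1..T. (z t k)^2) / e)"
    using Suc pivot_sum[OF assms] by (rule add_mono)
  finally show ?case by simp
qed


definition clip :: "real \<Rightarrow> real \<Rightarrow> real" where "clip r p = max (- r) (min r p)"

lemma clip_bound: "0 \<le> r \<Longrightarrow> \<bar>clip r p\<bar> \<le> r"
  unfolding clip_def by auto

lemma clip_f1_aux:
  fixes r p y :: real
  assumes "0 \<le> r" "r < p"
  shows "(r - y)^2 \<le> (p - y)^2 + max 0 (y^2 - r^2)"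
proof (cases "y \<le> r")
  case True
  have "0 \<le> (p - r) * (p + r - 2 * y)" using assms True by simp
  then show ?thesis by (simp add: power2_eq_square algebra_simps)
next
  case False
  have "0 \<le> r * (y - r)" using assms False by simp
  then have "(r - y)^2 \<le> y^2 - r^2" by (simp add: power2_eq_square algebra_simps)
  moreover have "y^2 - r^2 \<le> max 0 (y^2 - r^2)" by simp
  moreover have "0 \<le> (p - y)^2" by simp
  ultimately show ?thesis by linarith
qed

lemma clip_f1:
  assumes "0 \<le> r"
  shows "(clip r p - y)^2 \<le> (p - y)^2 + max 0 (y^2 - r^2)"
proof -
  consider "p > r" | "p < - r" | "- r \<le> p \<and> p \<le> r" by linarith
  then show ?thesis
  proof cases
    case 1
    then have "clip r p = r" unfolding clip_def using assms by simp
    then show ?thesis using clip_f1_aux[OF assms 1] by simp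
  next
    case 2
    then have "clip r p = - r" unfolding clip_def using assms by simp
    moreover have "(r - (-y))^2 \<le> ((-p) - (-y))^2 + max 0 ((-y)^2 - r^2)"
      using clip_f1_aux[OF assms, of "-p" "-y"] 2 by simp
    ultimately show ?thesis by (simp add: power2_eq_square algebra_simps)
  next
    case 3
    then have "clip r p = p" unfolding clip_def by simp
    then show ?thesis by simp
  qed
qed

lemma clip_gen:
  assumes "0 \<le> r" "r \<le> Y" "\<bar>y\<bar> \<le> Y" "a = \<bar>p - q\<bar>"
  shows "(clip r p - y)^2 - (q - y)^2 \<le> 5 * Y * a + max 0 (y^2 - r^2)"
proof -
  have f1: "(clip r p - y)^2 \<le> (p - y)^2 + max 0 (y^2 - r^2)"
    using clip_f1[OF assms(1)] .
  have f2: "(clip r p - y)^2 \<le> 4 * Y^2"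
  proof -
    have "\<bar>clip r p - y\<bar> \<le> 2 * Y" using clip_bound[OF assms(1), of p] assms by linarith
    then have "\<bar>clip r p - y\<bar>^2 \<le> (2 * Y)^2" by (rule power_mono) simp
    then show ?thesis by (simp add: power2_eq_square)
  qed
  have Y0: "0 \<le> Y" using assms by linarith
  show ?thesis
  proof (cases "\<bar>q - y\<bar> \<ge> 2 * Y")
    case True
    then have "(2 * Y)^2 \<le> \<bar>q - y\<bar>^2" by (rule power_mono) (use Y0 in simp)
    then have "4 * Y^2 \<le> (q - y)^2" by (simp add: power2_eq_square)
    moreover have "0 \<le> Y * a" using Y0 assms(4) by simp
    ultimately show ?thesis using f2 by linarith
  next
    case False
    have f3: "(p - y)^2 - (q - y)^2 \<le> a^2 + 2 * a * \<bar>q - y\<bar>"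
    proof -
      have "(p - y)^2 - (q - y)^2 = (p - q)^2 + 2 * (p - q) * (q - y)" by (simp add: power2_eq_square algebra_simps)
      also have "2 * (p - q) * (q - y) \<le> 2 * a * \<bar>q - y\<bar>"
      proof -
        have "2 * (p - q) * (q - y) \<le> \<bar>2 * (p - q) * (q - y)\<bar>" by (rule abs_ge_self)
        also have "\<dots> = 2 * a * \<bar>q - y\<bar>" unfolding abs_mult assms(4) by simp
        finally show ?thesis .
      qed
      finally show ?thesis using assms(4) by (simp add: power2_eq_square)
    qed
    have "a * \<bar>q - y\<bar> \<le> a * (2 * Y)" using False assms(4) by (intro mult_left_mono) auto
    then have "2 * a * \<bar>q - y\<bar> \<le> 4 * Y * a" by (simp add: algebra_simps)
    show ?thesis
    proof (cases "a \<le> Y")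
      case True
      have "a * a \<le> Y * a" using True assms(4) by (intro mult_right_mono) auto
      then have "a^2 \<le> Y * a" by (simp add: power2_eq_square)
      then show ?thesis using f1 f3 \<open>2 * a * \<bar>q - y\<bar> \<le> 4 * Y * a\<close> by linarith
    next
      case False
      then have "4 * Y^2 \<le> 4 * Y * a" using Y0 by (simp add: power2_eq_square mult_left_mono)
      moreover have "0 \<le> Y * a" using Y0 assms(4) by simp
      moreover have "0 \<le> (q - y)^2" by simp
      ultimately show ?thesis using f2 by linarith
    qed
  qed
qed


lemma clip0_aux:
  fixes r p y :: real
  assumes "0 \<le> r" "r < p"
  shows "(r - y)^2 - (p - y)^2 \<le> 2 * max 0 (\<bar>p\<bar> - r) * max 0 (\<bar>y\<bar> - r)"
        "(r - y)^2 - (p - y)^2 \<le> (max 0 (\<bar>y\<bar> - r))^2"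
proof -
  have eq: "(r - y)^2 - (p - y)^2 = (p - r) * (2 * y - p - r)" by (simp add: power2_eq_square algebra_simps)
  have pr: "0 \<le> p - r" using assms by simp
  have "(r - y)^2 - (p - y)^2 \<le> 2 * max 0 (\<bar>p\<bar> - r) * max 0 (\<bar>y\<bar> - r) \<and>
        (r - y)^2 - (p - y)^2 \<le> (max 0 (\<bar>y\<bar> - r))^2"
  proof (cases "y \<le> r")
    case True
    then have "(p - r) * (2 * y - p - r) \<le> 0" using assms by (intro mult_nonneg_nonpos) auto
    moreover have "0 \<le> 2 * max 0 (\<bar>p\<bar> - r) * max 0 (\<bar>y\<bar> - r)" by simp
    moreover have "0 \<le> (max 0 (\<bar>y\<bar> - r))^2" by simp
    ultimately show ?thesis using eq by linarith
  next
    case False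
    then have my: "max 0 (\<bar>y\<bar> - r) = y - r" "max 0 (\<bar>p\<bar> - r) = p - r" using assms by auto
    have "(p - r) * (2 * y - p - r) = 2 * (p - r) * (y - r) - (p - r) * (p - r)" by (simp add: algebra_simps)
    moreover have "0 \<le> (p - r) * (p - r)" by simp
    moreover have "(y - r)^2 - (p - r) * (2 * y - p - r) = (y - p)^2" by (simp add: power2_eq_square algebra_simps)
    moreover have "0 \<le> (y - p)^2" by simp
    ultimately show ?thesis unfolding my eq by linarith
  qed
  note h = this
  show "(r - y)^2 - (p - y)^2 \<le> 2 * max 0 (\<bar>p\<bar> - r) * max 0 (\<bar>y\<bar> - r)"
    using h by (rule conjunct1)
  show "(r - y)^2 - (p - y)^2 \<le> (max 0 (\<bar>y\<bar> - r))^2" using h by (rule conjunct2)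
qed

lemma clip0:
  fixes r p y :: real
  assumes "0 \<le> r"
  shows "(clip r p - y)^2 - (p - y)^2 \<le> 2 * max 0 (\<bar>p\<bar> - r) * max 0 (\<bar>y\<bar> - r)"
        "(clip r p - y)^2 - (p - y)^2 \<le> (max 0 (\<bar>y\<bar> - r))^2"
proof -
  consider "p > r" | "p < - r" | "- r \<le> p \<and> p \<le> r" by linarith
  then have "(clip r p - y)^2 - (p - y)^2 \<le> 2 * max 0 (\<bar>p\<bar> - r) * max 0 (\<bar>y\<bar> - r) \<and>
     (clip r p - y)^2 - (p - y)^2 \<le> (max 0 (\<bar>y\<bar> - r))^2"
  proof cases
    case 1
    then have "clip r p = r" unfolding clip_def using assms by simp
    then show ?thesis using clip0_aux[OF assms 1] by simp
  next
    case 2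
    then have c: "clip r p = - r" unfolding clip_def using assms by simp
    have e: "(clip r p - y)^2 - (p - y)^2 = (r - (-y))^2 - ((-p) - (-y))^2" unfolding c by (simp add: power2_eq_square algebra_simps)
    have r2: "r < - p" using 2 by simp
    have a: "\<bar>-p\<bar> = \<bar>p\<bar>" "\<bar>-y\<bar> = \<bar>y\<bar>" by simp_all
    show ?thesis unfolding e using clip0_aux[OF assms r2, of "-y"] unfolding a by blast
  next
    case 3
    then have "clip r p = p" unfolding clip_def by simp
    then show ?thesis by simp
  qed
  note h = this
  show "(clip r p - y)^2 - (p - y)^2 \<le> 2 * max 0 (\<bar>p\<bar> - r) * max 0 (\<bar>y\<bar> - r)"
    using h by (rule conjunct1)
  show "(clip r p - y)^2 - (p - y)^2 \<le> (max 0 (\<bar>y\<bar> - r))^2" using h by (rule conjunct2)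
qed

lemma ln_final:
  fixes x :: real
  assumes "0 \<le> x"
  shows "2 * min (max 0 (sqrt x - 1)) (1/2) \<le> ln (1 + x)"
proof -
  define s where "s = sqrt x"
  have s0: "0 \<le> s" and xs: "x = s^2" using assms unfolding s_def by auto
  consider "s \<le> 1" | "3/2 \<le> s" | "1 < s \<and> s < 3/2" by linarith
  then show ?thesis
  proof cases
    case 1
    then show ?thesis using assms unfolding s_def[symmetric] by simp
  next
    case 2
    have "(3/2) * (3/2) \<le> s * s" using 2 by (intro mult_mono) auto
    then have "9/4 \<le> x" using xs by (simp add: power2_eq_square)
    have "1 < ln (272/100::real)" by (rule ln_272_gt_1)
    also have "\<dots> \<le> ln (1 + x)" using \<open>9/4 \<le> x\<close> by simp
    moreover have "2 * min (max 0 (sqrt x - 1)) (1/2) \<le> 1"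
      by (auto simp: min_def max_def)
    ultimately show ?thesis by linarith
  next
    case 3
    have "1 + x - 2 * s = (s - 1)^2" using xs by (simp add: power2_eq_square algebra_simps)
    moreover have "0 \<le> (s - 1)^2" by simp
    ultimately have "2 * s \<le> 1 + x" by linarith
    then have "ln (2 * s) \<le> ln (1 + x)" using 3 by simp
    moreover have "ln (2 * s) = ln 2 + ln s" using 3 by (simp add: ln_mult)
    moreover have "2/3 \<le> ln (2::real)" by (rule ln2_ge_two_thirds)
    moreover have "1 - 1 / s \<le> ln s"
    proof -
      have "ln (1 / s) \<le> 1 / s - 1" using ln_le_minus_one 3 by simp
      then show ?thesis using 3 by (simp add: ln_div)
    qed
    moreover have "2 * (s - 1) \<le> 5/3 - 1 / s"
    proof -
      have "(s - 3/2) * (6 * s - 2) \<le> 0" using 3 by (intro mult_nonpos_nonneg) auto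
      then have "6 * s^2 - 11 * s + 3 \<le> 0" by (simp add: power2_eq_square algebra_simps)
      then show ?thesis using 3 by (simp add: field_simps power2_eq_square)
    qed
    ultimately have "2 * (s - 1) \<le> ln (1 + x)" by linarith
    then show ?thesis using 3 s_def by simp
  qed
qed

lemma jensen_ln:
  fixes a :: "nat \<Rightarrow> real"
  assumes "1 \<le> n" "\<And>i. i < n \<Longrightarrow> 0 < a i"
  shows "(\<Sum>i<n. ln (a i)) \<le> real n * ln ((\<Sum>i<n. a i) / real n)"
proof -
  define m where "m = (\<Sum>i<n. a i) / real n"
  have "{..<n} \<noteq> {}" using assms lessThan_empty_iff by auto
  then have "0 < (\<Sum>i<n. a i)" using assms by (intro sum_pos) auto
  then have m0: "0 < m" unfolding m_def using assms by simp
  have "ln (a i) \<le> ln m + (a i / m - 1)" if "i < n" for i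
  proof -
    have "ln (a i / m) \<le> a i / m - 1" using ln_le_minus_one assms(2)[OF that] m0 by simp
    moreover have "ln (a i / m) = ln (a i) - ln m" using assms(2)[OF that] m0 by (simp add: ln_div)
    ultimately show ?thesis by simp
  qed
  then have "(\<Sum>i<n. ln (a i)) \<le> (\<Sum>i<n. ln m + (a i / m - 1))" by (intro sum_mono) auto
  also have "\<dots> = real n * ln m + (\<Sum>i<n. a i) / m - real n"
    by (simp add: sum.distrib sum_subtractf sum_divide_distrib[symmetric])
  also have "(\<Sum>i<n. a i) / m = real n" unfolding m_def using assms \<open>0 < (\<Sum>i<n. a i)\<close> by simp
  finally show ?thesis unfolding m_def by simp
qed

lemma ln_bernoulli:
  fixes x :: real
  assumes "1 \<le> n" "0 \<le> x"
  shows "ln (1 + x) \<le> real n * ln (1 + x / real n)"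
proof -
  have "1 + real n * (x / real n) \<le> (1 + x / real n)^n"
  proof (rule Bernoulli_inequality)
    have "0 \<le> x / real n" using assms by simp
    then show "-1 \<le> x / real n" by linarith
  qed
  then have "1 + x \<le> (1 + x / real n)^n" using assms by simp
  then have "ln (1 + x) \<le> ln ((1 + x / real n)^n)" using assms by simp
  also have "\<dots> = real n * ln (1 + x / real n)" using assms by (simp add: ln_realpow)
  finally show ?thesis .
qed


lemma telescope2: "(\<Sum>t=1..(T::nat). h (Suc t) - h t) = h (Suc T) - (h 1 :: real)"
  by (induction T) auto

lemma topk:
  fixes f g :: "nat \<Rightarrow> real" and M :: "nat \<Rightarrow> nat set" and k :: nat
  assumes k: "1 \<le> k" and B: "0 \<le> B"
    and M: "\<And>t. t \<in> {1..T} \<Longrightarrow> finite (M t) \<and> card (M t) < k"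
    and fg: "\<And>t s. t \<in> {1..T} \<Longrightarrow> s \<in> {1..t-1} - M t \<Longrightarrow> f s \<le> g t"
    and g0: "\<And>t. t \<in> {1..T} \<Longrightarrow> 0 \<le> g t"
    and fB: "\<And>s. s \<in> {1..T} \<Longrightarrow> f s \<le> B"
  shows "(\<Sum>t=1..T. max 0 (f t - g t)) \<le> real k * B"
proof -
  define F where "F t = {A. A \<subseteq> {1..t-1} \<and> card A \<le> k}" for t :: nat
  define St where "St t = Max ((\<lambda>A. sum f A) ` F t)" for t
  have finF: "finite (F t)" for t
  proof -
    have "F t \<subseteq> Pow {1..t-1}" unfolding F_def by auto
    then show ?thesis by (rule finite_subset) simp
  qed
  have emF: "{} \<in> F t" for t unfolding F_def by simp
  have geSt: "sum f A \<le> St t" if "A \<in> F t" for A t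
    unfolding St_def using finF that by (intro Max_ge) auto
  have exSt: "\<exists>A\<in>F t. St t = sum f A" for t
  proof -
    have "St t \<in> (\<lambda>A. sum f A) ` F t" unfolding St_def using finF emF by (intro Max_in) auto
    then show ?thesis by auto
  qed
  have step: "St t + max 0 (f t - g t) \<le> St (Suc t)" if t: "t \<in> {1..T}" for t
  proof -
    obtain A where A: "A \<in> F t" "St t = sum f A" using exSt by blast
    have Asub: "A \<subseteq> {1..t-1}" and Acard: "card A \<le> k" using A unfolding F_def by auto
    have finA: "finite A" using Asub finite_subset by blast
    have tA: "t \<notin> A" using Asub t by auto
    have FS: "F (Suc t) = {A. A \<subseteq> {1..t} \<and> card A \<le> k}" unfolding F_def by simp
    have Asub': "A \<subseteq> {1..t}" using Asub by (rule order_trans) auto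
    have "A \<in> F (Suc t)" using Asub' Acard unfolding FS by simp
    then have le1: "St t \<le> St (Suc t)" using geSt A by simp
    show ?thesis
    proof (cases "f t \<le> g t")
      case True
      then show ?thesis using le1 by simp
    next
      case False
      show ?thesis
      proof (cases "card A < k")
        case True
        have "insert t A \<in> F (Suc t)" using Asub' True finA tA t unfolding FS by auto
        then have "sum f (insert t A) \<le> St (Suc t)" by (rule geSt)
        moreover have "sum f (insert t A) = St t + f t" using finA tA A by simp
        ultimately show ?thesis using False g0[OF t] by simp
      next
        case False2: False
        have "\<not> A \<subseteq> M t"
        proof
          assume "A \<subseteq> M t"
          then have "card A \<le> card (M t)" using M[OF t] by (intro card_mono) auto
          then show False using M[OF t] False2 by simp
        qed
        then obtain s where s: "s \<in> A" "s \<notin> M t" by blast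
        have fs: "f s \<le> g t" using fg[OF t] s Asub by auto
        define A' where "A' = insert t (A - {s})"
        have cA': "card A' = card A" unfolding A'_def using finA tA s(1)
          by (simp add: card_Diff_singleton) (metis Suc_pred card_gt_0_iff empty_iff)
        have "A' \<in> F (Suc t)" using Asub' Acard cA' t unfolding FS A'_def by auto
        then have "sum f A' \<le> St (Suc t)" by (rule geSt)
        moreover have "sum f A' = St t - f s + f t"
        proof -
          have "sum f A' = f t + sum f (A - {s})" unfolding A'_def using finA tA by simp
          also have "sum f (A - {s}) = sum f A - f s" using finA s(1) by (simp add: sum_diff1)
          finally show ?thesis using A by simp
        qed
        ultimately show ?thesis using fs False by simp
      qed
    qed
  qed
  have "(\<Sum>t=1..T. max 0 (f t - g t)) \<le> (\<Sum>t=1..T. St (Suc t) - St t)"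
    using step by (intro sum_mono) (simp add: algebra_simps)
  also have "\<dots> = St (Suc T) - St 1" by (rule telescope2)
  also have "St 1 = 0"
  proof -
    have "F 1 = {{}}" unfolding F_def by auto
    then show ?thesis unfolding St_def by simp
  qed
  also have "St (Suc T) \<le> real k * B"
  proof -
    obtain A where A: "A \<in> F (Suc T)" "St (Suc T) = sum f A" using exSt by blast
    have Asub: "A \<subseteq> {1..T}" and Acard: "card A \<le> k" using A unfolding F_def by auto
    have "sum f A \<le> sum (\<lambda>_. B) A" using Asub fB by (intro sum_mono) auto
    also have "\<dots> = real (card A) * B" by simp
    also have "\<dots> \<le> real k * B" using Acard B by (intro mult_right_mono) auto
    finally show ?thesis using A by simp
  qed
  finally show ?thesis by simp
qed


lemma vinner_lincomb: "vinner n (\<lambda>i. \<Sum>s\<in>S. a s * v s i) x = (\<Sum>s\<in>S. a s * vinner n (v s) x)"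
  unfolding vinner_def by (simp add: sum_distrib_right sum_distrib_left sum.swap[of _ S] mult.assoc)

lemma Bf_lin_sq: "Bf n e z S (\<lambda>i. a i + r * b i) (\<lambda>i. a i + r * b i)
   = Bf n e z S a a + 2 * r * Bf n e z S a b + r^2 * Bf n e z S b b"
  by (simp add: Bf_add_left Bf_add_right Bf_scale_left Bf_scale_right Bf_sym[of n e z S b a] power2_eq_square algebra_simps)

locale setting =
  fixes n T :: nat and z :: "nat \<Rightarrow> nat \<Rightarrow> real" and y :: "nat \<Rightarrow> real" and d :: "nat \<Rightarrow> nat"
    and eta :: "nat \<Rightarrow> real" and Y Z :: real
  assumes T1: "1 \<le> T" and n1: "1 \<le> n" and dT: "\<forall>t\<in>{1..T}. t + d t \<le> T"
    and Y0: "0 \<le> Y" and Z0: "0 \<le> Z" and zZ: "\<forall>t\<in>{1..T}. vnorm n (z t) \<le> Z"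
    and yY: "\<forall>t\<in>{1..T}. \<bar>y t\<bar> \<le> Y" and eta0: "0 < eta 0" and etamono: "\<forall>t<T. eta t \<le> eta (Suc t)"
begin

lemma eta_mono: "s \<le> t \<Longrightarrow> t \<le> T \<Longrightarrow> eta s \<le> eta t"
proof (induction t)
  case 0 then show ?case by simp
next
  case (Suc t)
  show ?case
  proof (cases "s = Suc t")
    case False
    then have "eta s \<le> eta t" using Suc by simp
    also have "eta t \<le> eta (Suc t)" using etamono Suc by simp
    finally show ?thesis .
  qed simp
qed

lemma eta_pos: "t \<le> T \<Longrightarrow> 0 < eta t"
  using eta_mono[of 0 t] eta0 by simp

lemma obs_sub: "obs d t \<subseteq> {1..t-1}"
  unfolding obs_def by auto

lemma obs_fin: "finite (obs d t)"
  using obs_sub finite_subset by blast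

lemma miss_fin: "finite (miss d t)"
  unfolding miss_def by simp

lemma zz: "t \<in> {1..T} \<Longrightarrow> vinner n (z t) (z t) \<le> Z^2"
proof -
  assume t: "t \<in> {1..T}"
  have "vnorm n (z t) \<le> Z" using zZ t by simp
  moreover have "0 \<le> vnorm n (z t)" unfolding vnorm_def by (simp add: sum_nonneg)
  ultimately have "(vnorm n (z t))^2 \<le> Z^2" by (rule power_mono)
  then show ?thesis by (simp add: vnorm_sq)
qed

definition bvec :: "nat \<Rightarrow> nat \<Rightarrow> real" where "bvec t = (\<lambda>i. \<Sum>\<tau>\<in>obs d t. y \<tau> * z \<tau> i)"
definition cvec :: "nat \<Rightarrow> nat \<Rightarrow> real" where "cvec t = (\<lambda>i. \<Sum>\<tau>\<in>{1..t}. y \<tau> * z \<tau> i)"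

lemma obj_eq: "vaw_obj n z y d eta t x = Bf n (eta t) z {1..t} x x / 2 - vinner n (bvec t) x"
  unfolding vaw_obj_def Bf_def bvec_def vinner_lincomb vnorm_sq
  by (simp add: sum_negf power2_eq_square algebra_simps sum_divide_distrib[symmetric])

lemma vaw_x_eq:
  assumes "t \<le> T"
  shows "vaw_x n z y d eta t = sol n (eta t) z {1..t} (bvec t)"
proof -
  let ?e = "eta t" and ?S = "{1..t}"
  let ?x0 = "sol n ?e z ?S (bvec t)"
  have e: "0 < ?e" using eta_pos assms by simp
  have s0: "solves n ?e z ?S (bvec t) ?x0" using sol[OF _ e] by simp
  have P0: "in_Rn n ?x0 \<and> (\<forall>x'. in_Rn n x' \<longrightarrow> vaw_obj n z y d eta t ?x0 \<le> vaw_obj n z y d eta t x')"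
    using s0 solves_min[OF s0] e unfolding obj_eq solves_def by auto
  show ?thesis unfolding vaw_x_def
  proof (rule the_equality)
    fix x assume "in_Rn n x \<and> (\<forall>x'. in_Rn n x' \<longrightarrow> vaw_obj n z y d eta t x \<le> vaw_obj n z y d eta t x')"
    then have xR: "in_Rn n x" and xm: "vaw_obj n z y d eta t x \<le> vaw_obj n z y d eta t ?x0" using P0 by auto
    have "Bf n ?e z ?S (\<lambda>i. x i - ?x0 i) (\<lambda>i. x i - ?x0 i) = Bf n ?e z ?S x x - 2 * vinner n (bvec t) x + vinner n (bvec t) ?x0"
      using s0 unfolding Bf_sq_diff solves_def by (simp add: Bf_sym[of n ?e z ?S x ?x0])
    also have "\<dots> = 2 * (vaw_obj n z y d eta t x - vaw_obj n z y d eta t ?x0)"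
      unfolding obj_eq using solves_self[OF s0] by simp
    finally have "Bf n ?e z ?S (\<lambda>i. x i - ?x0 i) (\<lambda>i. x i - ?x0 i) \<le> 0" using xm by simp
    then have "?e * vinner n (\<lambda>i. x i - ?x0 i) (\<lambda>i. x i - ?x0 i) \<le> 0"
      using Bf_self_ge[of ?e n "\<lambda>i. x i - ?x0 i" z ?S] e by simp
    moreover have "0 \<le> ?e * vinner n (\<lambda>i. x i - ?x0 i) (\<lambda>i. x i - ?x0 i)"
      using e vinner_self_nonneg by simp
    ultimately have "?e * vinner n (\<lambda>i. x i - ?x0 i) (\<lambda>i. x i - ?x0 i) = 0" by linarith
    then have "vinner n (\<lambda>i. x i - ?x0 i) (\<lambda>i. x i - ?x0 i) = 0" using e by simp
    then have "\<forall>i<n. x i = ?x0 i" using vinner_self_eq0 by fastforce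
    then show "x = ?x0" using xR s0 unfolding solves_def in_Rn_def by (metis not_le ext)
  qed (use P0 in blast)
qed

lemma rho_nonneg: "0 \<le> rho y d t"
proof (cases "obs d t = {}")
  case False
  then obtain s where "s \<in> obs d t" by blast
  then have "\<bar>y s\<bar> \<le> rho y d t" unfolding rho_def using obs_fin False by auto
  then show ?thesis by linarith
qed (simp add: rho_def)

lemma rho_ge: "s \<in> obs d t \<Longrightarrow> \<bar>y s\<bar> \<le> rho y d t"
  unfolding rho_def using obs_fin by auto

lemma rho_le: "t \<le> T \<Longrightarrow> rho y d t \<le> Y"
proof (cases "obs d t = {}")
  case False
  assume t: "t \<le> T"
  have "Max ((\<lambda>\<tau>. \<bar>y \<tau>\<bar>) ` obs d t) \<in> (\<lambda>\<tau>. \<bar>y \<tau>\<bar>) ` obs d t" using obs_fin False by (intro Max_in) auto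
  then obtain s where s1: "s \<in> obs d t" and s2: "Max ((\<lambda>\<tau>. \<bar>y \<tau>\<bar>) ` obs d t) = \<bar>y s\<bar>" by blast
  have "rho y d t = \<bar>y s\<bar>" unfolding rho_def using False s2 by simp
  moreover have "s \<in> {1..T}" using s1 t unfolding obs_def by simp
  ultimately show ?thesis using yY by simp
qed (simp add: rho_def Y0)

definition pl :: "nat \<Rightarrow> real" where "pl t = vinner n (z t) (sol n (eta t) z {1..t} (bvec t))"

lemma play_eq:
  assumes "t \<le> T"
  shows "vinner n (z t) (vaw_play n z y d eta t) = clip (rho y d t) (pl t)"
proof -
  let ?x = "vaw_x n z y d eta t"
  have px: "vinner n (z t) ?x = pl t" unfolding pl_def vaw_x_eq[OF assms] ..
  have r0: "0 \<le> rho y d t" by (rule rho_nonneg)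
  show ?thesis
  proof (cases "pl t = 0")
    case True
    then show ?thesis unfolding vaw_play_def Let_def px clip_def using px r0 by simp
  next
    case False
    then have "vinner n (z t) (vaw_play n z y d eta t) = min (rho y d t / \<bar>pl t\<bar>) 1 * pl t"
      unfolding vaw_play_def Let_def px using px by (simp add: vinner_scale_right)
    also have "\<dots> = clip (rho y d t) (pl t)"
    proof (cases "\<bar>pl t\<bar> \<le> rho y d t")
      case True
      then have "rho y d t / \<bar>pl t\<bar> \<ge> 1" using False by simp
      then have "min (rho y d t / \<bar>pl t\<bar>) 1 = 1" by simp
      moreover have "clip (rho y d t) (pl t) = pl t" unfolding clip_def using True by (simp add: abs_le_iff)
      ultimately show ?thesis by simp
    next
      case F: False
      then have "rho y d t / \<bar>pl t\<bar> \<le> 1" using False by simp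
      then have m: "min (rho y d t / \<bar>pl t\<bar>) 1 * pl t = rho y d t / \<bar>pl t\<bar> * pl t" by simp
      show ?thesis
      proof (cases "pl t > 0")
        case True
        then have "\<bar>pl t\<bar> = pl t" by simp
        then have "rho y d t / \<bar>pl t\<bar> * pl t = rho y d t" using True by simp
        moreover have "clip (rho y d t) (pl t) = rho y d t" unfolding clip_def using True F r0 by simp
        ultimately show ?thesis unfolding m by simp
      next
        case F2: False
        then have n: "pl t < 0" using False by simp
        then have "\<bar>pl t\<bar> = - pl t" by simp
        then have "rho y d t / \<bar>pl t\<bar> * pl t = - rho y d t" using n by simp
        moreover have "clip (rho y d t) (pl t) = - rho y d t" unfolding clip_def using n F r0 by simp
        ultimately show ?thesis unfolding m by simp
      qed
    qed
    finally show ?thesis .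
  qed
qed

lemma regret_eq:
  "regret n T z y d eta u = (\<Sum>t=1..T. (clip (rho y d t) (pl t) - y t)^2 / 2 - (vinner n (z t) u - y t)^2 / 2)"
  unfolding regret_def sqloss_def
proof (rule sum.cong)
  fix t assume "t \<in> {1..T}"
  then have "t \<le> T" by simp
  show "(vinner n (z t) (vaw_play n z y d eta t) - y t)\<^sup>2 / 2 - (vinner n (z t) u - y t)\<^sup>2 / 2 =
    (clip (rho y d t) (pl t) - y t)\<^sup>2 / 2 - (vinner n (z t) u - y t)\<^sup>2 / 2"
    using play_eq[OF \<open>t \<le> T\<close>] by simp
qed simp

end

context setting begin

definition xs :: "nat \<Rightarrow> nat \<Rightarrow> real" where "xs t = sol n (eta t) z {1..t} (cvec (t - 1))"
definition ps :: "nat \<Rightarrow> real" where "ps t = vinner n (z t) (xs t)"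
definition vv :: "nat \<Rightarrow> nat \<Rightarrow> nat \<Rightarrow> real" where "vv t s = sol n (eta t) z {1..t} (z s)"
definition w :: "nat \<Rightarrow> real" where "w t = wv n (eta t) z {1..t} (z t)"
definition Lf :: "nat \<Rightarrow> (nat \<Rightarrow> real) \<Rightarrow> real" where
  "Lf t x = (\<Sum>\<tau>=1..t. (vinner n (z \<tau>) x - y \<tau>)^2 / 2) + eta t / 2 * vinner n x x"
definition Mv :: "nat \<Rightarrow> real" where "Mv t = Lf t (sol n (eta t) z {1..t} (cvec t))"

lemma vinner_cvec: "vinner n (cvec t) x = (\<Sum>\<tau>=1..t. y \<tau> * vinner n (z \<tau>) x)"
  unfolding cvec_def by (rule vinner_lincomb)

lemma vinner_bvec: "vinner n (bvec t) x = (\<Sum>\<tau>\<in>obs d t. y \<tau> * vinner n (z \<tau>) x)"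
  unfolding bvec_def by (rule vinner_lincomb)

lemma Lf_eq: "Lf t x = Bf n (eta t) z {1..t} x x / 2 - vinner n (cvec t) x + (\<Sum>\<tau>=1..t. (y \<tau>)^2 / 2)"
proof -
  have "(\<Sum>\<tau>=1..t. (vinner n (z \<tau>) x - y \<tau>)^2 / 2) =
     (\<Sum>\<tau>=1..t. vinner n (z \<tau>) x * vinner n (z \<tau>) x / 2 - y \<tau> * vinner n (z \<tau>) x + (y \<tau>)^2 / 2)"
    by (intro sum.cong) (auto simp: power2_eq_square field_simps)
  also have "\<dots> = (\<Sum>\<tau>=1..t. vinner n (z \<tau>) x * vinner n (z \<tau>) x) / 2 - (\<Sum>\<tau>=1..t. y \<tau> * vinner n (z \<tau>) x)
      + (\<Sum>\<tau>=1..t. (y \<tau>)^2 / 2)"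
    by (simp add: sum.distrib sum_subtractf sum_divide_distrib)
  finally show ?thesis unfolding Lf_def Bf_def vinner_cvec by (simp add: algebra_simps)
qed

lemma Mv_min:
  assumes "t \<le> T"
  shows "Mv t \<le> Lf t x"
proof -
  have e: "0 < eta t" using eta_pos assms by simp
  show ?thesis unfolding Mv_def Lf_eq using solves_min[OF sol[OF _ e] , of "{1..t}" n z "cvec t" x] e by simp
qed

lemma Mv_lower:
  assumes "t \<le> T" "solves n (eta t) z {1..t} (cvec t) x"
  shows "Lf t x \<le> Mv t"
proof -
  have e: "0 < eta t" using eta_pos assms by simp
  show ?thesis unfolding Mv_def Lf_eq using solves_min[OF assms(2), of "sol n (eta t) z {1..t} (cvec t)"] e by simp
qed

lemma Mv0: "0 \<le> Mv 0"
  unfolding Mv_def Lf_def using eta0 vinner_self_nonneg by simp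

lemma cvec_Suc: "1 \<le> t \<Longrightarrow> cvec t = (\<lambda>i. cvec (t - 1) i + y t * z t i)"
proof -
  assume t: "1 \<le> t"
  have "{1..t} = insert t {1..t-1}" "t \<notin> {1..t-1}" using t by auto
  then show ?thesis unfolding cvec_def by (simp add: add.commute)
qed

lemma vaw_step:
  assumes t: "t \<in> {1..T}"
  shows "(ps t - y t)^2 / 2 \<le> Mv t - Mv (t - 1) + (y t)^2 * w t / 2"
proof -
  let ?e = "eta t" and ?ep = "eta (t-1)" and ?S = "{1..t}" and ?Sp = "{1..t-1}"
  let ?cp = "cvec (t-1)" and ?x = "xs t" and ?v = "vv t t" and ?yt = "y t"
  have tT: "t \<le> T" using t by simp
  have e: "0 < ?e" using eta_pos tT by simp
  have e0: "0 < ?ep" using eta_pos[of "t - 1"] tT by simp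
  have ee: "?ep \<le> ?e" using eta_mono[of "t - 1" t] tT by simp
  have SS1: "?S = insert t ?Sp" using t by auto
  have SS2: "t \<notin> ?Sp" using t by (cases t) auto
  note SS = SS1 SS2
  have sx: "solves n ?e z ?S ?cp ?x" unfolding xs_def using sol[OF _ e] by simp
  have sv: "solves n ?e z ?S (z t) ?v" unfolding vv_def using sol[OF _ e] by simp
  have cS: "cvec t = (\<lambda>i. ?cp i + y t * z t i)" using cvec_Suc t by simp
  define p where "p = ps t"
  define P where "P = Bf n ?e z ?S ?x ?x"
  have wB: "w t = Bf n ?e z ?S ?v ?v" unfolding w_def using wv_eq_Bf[OF _ e sv] by simp
  have wv: "w t = vinner n (z t) ?v" unfolding w_def using wv_eq[OF _ e sv] by simp
  have w0: "0 \<le> w t" unfolding wB using Bf_self_nonneg e by simp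
  have Bxv: "Bf n ?e z ?S ?x ?v = p" unfolding p_def ps_def using sv unfolding solves_def by (metis Bf_sym)
  have c0v: "vinner n ?cp ?v = p" using sx Bxv unfolding solves_def by metis
  have c0x: "vinner n ?cp ?x = P" unfolding P_def using solves_self[OF sx] by simp
  have zx: "vinner n (z t) ?x = p" unfolding p_def ps_def ..
  define x1 where "x1 = (\<lambda>i. ?x i + ?yt * ?v i)"
  define x2 where "x2 = (\<lambda>i. ?x i + p * ?v i)"
  have sx1: "solves n ?e z ?S (cvec t) x1"
  proof -
    have "in_Rn n x1" using sx sv unfolding x1_def solves_def in_Rn_def by simp
    moreover have "Bf n ?e z ?S x1 y' = vinner n (cvec t) y'" for y'
    proof -
      have "Bf n ?e z ?S x1 y' = Bf n ?e z ?S ?x y' + ?yt * Bf n ?e z ?S ?v y'"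
        unfolding x1_def by (simp add: Bf_add_left Bf_scale_left)
      also have "\<dots> = vinner n ?cp y' + ?yt * vinner n (z t) y'" using sx sv unfolding solves_def by simp
      also have "\<dots> = vinner n (cvec t) y'"
        unfolding cS by (simp add: vinner_add_left vinner_scale_left)
      finally show ?thesis .
    qed
    ultimately show ?thesis unfolding solves_def by blast
  qed
  have L1: "Lf t x1 \<le> Mv t" using Mv_lower[OF tT sx1] .
  have L2: "Mv (t - 1) \<le> Lf (t - 1) x2" using Mv_min tT by simp
  have K: "(\<Sum>\<tau>=1..t. (y \<tau>)^2 / 2) = (\<Sum>\<tau>=1..t-1. (y \<tau>)^2 / 2) + ?yt^2 / 2"
    using SS by (simp add: add.commute)
  define K0 where "K0 = (\<Sum>\<tau>=1..t-1. (y \<tau>)^2 / 2)"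
  have Bx1: "Bf n ?e z ?S x1 x1 = P + 2 * ?yt * p + ?yt^2 * w t"
    unfolding x1_def Bf_lin_sq P_def Bxv wB ..
  have cx1: "vinner n (cvec t) x1 = P + 2 * ?yt * p + ?yt^2 * w t"
  proof -
    have "vinner n (cvec t) x1 = vinner n ?cp x1 + ?yt * vinner n (z t) x1"
      unfolding cS by (simp add: vinner_add_left vinner_scale_left)
    also have "vinner n ?cp x1 = P + ?yt * p" unfolding x1_def
      by (simp only: vinner_add_right vinner_scale_right c0x c0v)
    also have "vinner n (z t) x1 = p + ?yt * w t" unfolding x1_def
      by (simp add: vinner_add_right vinner_scale_right zx wv)
    finally show ?thesis by (simp add: power2_eq_square algebra_simps)
  qed
  have Lx1: "Lf t x1 = - (P + 2 * ?yt * p + ?yt^2 * w t) / 2 + K0 + ?yt^2 / 2"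
    unfolding Lf_eq Bx1 cx1 K K0_def by simp
  have Bx2: "Bf n ?e z ?S x2 x2 = P + 2 * p * p + p^2 * w t"
    unfolding x2_def Bf_lin_sq P_def Bxv wB ..
  have zx2: "vinner n (z t) x2 = p + p * w t" unfolding x2_def
    by (simp add: vinner_add_right vinner_scale_right zx wv)
  have cx2: "vinner n ?cp x2 = P + p * p" unfolding x2_def
    by (simp only: vinner_add_right vinner_scale_right c0x c0v)
  have "Bf n ?ep z ?Sp x2 x2 \<le> Bf n ?e z ?Sp x2 x2" by (rule Bf_mono_e[OF ee])
  also have "Bf n ?e z ?Sp x2 x2 = Bf n ?e z ?S x2 x2 - (vinner n (z t) x2)^2"
    unfolding SS(1) using Bf_insert[of ?Sp t n ?e z x2 x2] SS(2) by (simp add: power2_eq_square)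
  finally have B02: "Bf n ?ep z ?Sp x2 x2 \<le> P + 2 * p * p + p^2 * w t - (p + p * w t)^2"
    unfolding Bx2 zx2 .
  have Lx2: "Lf (t - 1) x2 \<le> (P + 2 * p * p + p^2 * w t - (p + p * w t)^2) / 2 - (P + p * p) + K0"
    unfolding Lf_eq cx2 K0_def using B02 by simp
  have key: "(p - ?yt)^2 / 2 - ((- (P + 2 * ?yt * p + ?yt^2 * w t) / 2 + K0 + ?yt^2 / 2)
        - ((P + 2 * p * p + p^2 * w t - (p + p * w t)^2) / 2 - (P + p * p) + K0)) - ?yt^2 * w t / 2
        = - (p^2 * w t * (1 + w t)) / 2"
    by (simp add: power2_eq_square field_simps)
  have "0 \<le> p^2 * w t * (1 + w t)" using w0 by simp
  then show ?thesis using key L1 L2 Lx1 Lx2 unfolding p_def by linarith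
qed

end

context setting begin

lemma w_nonneg: "t \<le> T \<Longrightarrow> 0 \<le> w t"
  unfolding w_def using wv_nonneg eta_pos by simp

lemma vaw_total:
  "(\<Sum>t=1..T. (ps t - y t)^2 / 2) \<le> (\<Sum>t=1..T. (vinner n (z t) u - y t)^2 / 2)
     + eta T / 2 * (vnorm n u)^2 + (\<Sum>t=1..T. (y t)^2 * w t / 2)"
proof -
  have "(\<Sum>t=1..T. (ps t - y t)^2 / 2) \<le> (\<Sum>t=1..T. (Mv t - Mv (t - 1)) + (y t)^2 * w t / 2)"
    using vaw_step by (intro sum_mono) auto
  also have "\<dots> = (Mv T - Mv 0) + (\<Sum>t=1..T. (y t)^2 * w t / 2)"
    by (simp only: sum.distrib telescope)
  also have "Mv T \<le> Lf T u" using Mv_min by simp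
  also have "Lf T u = (\<Sum>t=1..T. (vinner n (z t) u - y t)^2 / 2) + eta T / 2 * (vnorm n u)^2"
    unfolding Lf_def vnorm_sq ..
  finally show ?thesis using Mv0 by simp
qed

definition Lg :: real where "Lg = real n * ln (1 + Z^2 * real T / (eta 0 * real n))"

lemma w_sum: "(\<Sum>t=1..T. w t) \<le> Lg"
proof -
  have "(\<Sum>t=1..T. w t) \<le> (\<Sum>t=1..T. wv n (eta 0) z {1..t} (z t))"
    unfolding w_def using eta0 eta_mono by (intro sum_mono wv_mono) auto
  also have "\<dots> \<le> (\<Sum>i<n. ln (1 + (\<Sum>t=1..T. (z t i)^2) / eta 0))" by (rule elliptical[OF eta0])
  also have "\<dots> \<le> real n * ln ((\<Sum>i<n. 1 + (\<Sum>t=1..T. (z t i)^2) / eta 0) / real n)"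
  proof (rule jensen_ln[OF n1])
    fix i assume "i < n"
    have "0 \<le> (\<Sum>t=1..T. (z t i)^2) / eta 0" using eta0 by (simp add: sum_nonneg)
    then show "0 < 1 + (\<Sum>t=1..T. (z t i)^2) / eta 0" by linarith
  qed
  also have "(\<Sum>i<n. 1 + (\<Sum>t=1..T. (z t i)^2) / eta 0) / real n
      = 1 + (\<Sum>t=1..T. vinner n (z t) (z t)) / (eta 0 * real n)"
  proof -
    have "(\<Sum>i<n. (\<Sum>t=1..T. (z t i)^2)) = (\<Sum>t=1..T. vinner n (z t) (z t))"
      unfolding vinner_def by (simp add: sum.swap[of _ "{..<n}"] power2_eq_square)
    then have "(\<Sum>i<n. 1 + (\<Sum>t=1..T. (z t i)^2) / eta 0) = real n + (\<Sum>t=1..T. vinner n (z t) (z t)) / eta 0"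
      by (simp add: sum.distrib sum_divide_distrib[symmetric])
    then show ?thesis using n1 eta0 by (simp add: field_simps)
  qed
  also have "real n * ln (1 + (\<Sum>t=1..T. vinner n (z t) (z t)) / (eta 0 * real n)) \<le> Lg"
  proof -
    have "(\<Sum>t=1..T. vinner n (z t) (z t)) \<le> (\<Sum>t=1..T. Z^2)" using zz by (intro sum_mono) auto
    then have s: "(\<Sum>t=1..T. vinner n (z t) (z t)) \<le> Z^2 * real T" by (simp add: mult.commute)
    have p: "0 < eta 0 * real n" using eta0 n1 by simp
    have s0: "0 \<le> (\<Sum>t=1..T. vinner n (z t) (z t))" using vinner_self_nonneg by (simp add: sum_nonneg)
    have "(\<Sum>t=1..T. vinner n (z t) (z t)) / (eta 0 * real n) \<le> Z^2 * real T / (eta 0 * real n)"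
      using s p by (simp add: divide_right_mono)
    moreover have "0 < 1 + (\<Sum>t=1..T. vinner n (z t) (z t)) / (eta 0 * real n)" using s0 p by (simp add: add_pos_nonneg)
    ultimately have "ln (1 + (\<Sum>t=1..T. vinner n (z t) (z t)) / (eta 0 * real n)) \<le> ln (1 + Z^2 * real T / (eta 0 * real n))"
      by simp
    then show ?thesis unfolding Lg_def by (simp add: mult_left_mono)
  qed
  finally show ?thesis .
qed

lemma Lg_nonneg: "0 \<le> Lg"
  unfolding Lg_def using eta0 n1 by (simp add: zero_le_divide_iff)

end

context setting begin

abbreviation "dm \<equiv> d_max T d"
abbreviation "sg \<equiv> sigma_max T d"

lemma d_le: "\<tau> \<in> {1..T} \<Longrightarrow> d \<tau> \<le> dm"
  unfolding d_max_def by (intro Max_ge) auto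

lemma card_miss_sg: "t \<in> {1..T} \<Longrightarrow> card (miss d t) \<le> sg"
  unfolding sigma_max_def by (intro Max_ge) auto

lemma miss_sub: "miss d t \<subseteq> {1..t-1}"
  unfolding miss_def by auto

lemma miss_iff: "\<tau> \<in> miss d t \<longleftrightarrow> 1 \<le> \<tau> \<and> \<tau> < t \<and> t \<le> \<tau> + d \<tau>"
  unfolding miss_def obs_def by auto

lemma card_miss_dm:
  assumes t: "t \<in> {1..T}"
  shows "card (miss d t) \<le> dm"
proof -
  have "miss d t \<subseteq> {t - dm..<t}"
  proof
    fix \<tau> assume "\<tau> \<in> miss d t"
    then have h: "1 \<le> \<tau>" "\<tau> < t" "t \<le> \<tau> + d \<tau>" using miss_iff by auto
    then have "\<tau> \<in> {1..T}" using t by auto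
    then have "d \<tau> \<le> dm" by (rule d_le)
    then show "\<tau> \<in> {t - dm..<t}" using h by auto
  qed
  then have "card (miss d t) \<le> card {t - dm..<t}" by (intro card_mono) auto
  also have "\<dots> \<le> dm" by simp
  finally show ?thesis .
qed

lemma double_sum:
  assumes f0: "\<And>\<tau>. \<tau> \<in> {1..T} \<Longrightarrow> 0 \<le> f \<tau>"
  shows "(\<Sum>t=1..T. \<Sum>\<tau>\<in>miss d t. f \<tau>) \<le> real dm * (\<Sum>\<tau>=1..T. f \<tau>)"
proof -
  have "(\<Sum>t=1..T. \<Sum>\<tau>\<in>miss d t. f \<tau>) = (\<Sum>t=1..T. \<Sum>\<tau>=1..T. if \<tau> \<in> miss d t then f \<tau> else 0)"
  proof (rule sum.cong[OF refl])
    fix t assume t: "t \<in> {1..T}"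
    have "miss d t \<subseteq> {1..T}" using miss_sub t by fastforce
    show "(\<Sum>\<tau>\<in>miss d t. f \<tau>) = (\<Sum>\<tau>=1..T. if \<tau> \<in> miss d t then f \<tau> else 0)"
    proof -
      have e: "{1..T} \<inter> miss d t = miss d t" using \<open>miss d t \<subseteq> {1..T}\<close> by blast
      have "(\<Sum>\<tau>=1..T. if \<tau> \<in> miss d t then f \<tau> else 0) = sum f ({1..T} \<inter> miss d t)"
        by (rule sum.inter_restrict[symmetric]) simp
      then show ?thesis unfolding e by simp
    qed
  qed
  also have "\<dots> = (\<Sum>\<tau>=1..T. \<Sum>t=1..T. if \<tau> \<in> miss d t then f \<tau> else 0)" by (rule sum.swap)
  also have "\<dots> \<le> (\<Sum>\<tau>=1..T. real dm * f \<tau>)"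
  proof (intro sum_mono)
    fix \<tau> assume tau: "\<tau> \<in> {1..T}"
    have "(\<Sum>t=1..T. if \<tau> \<in> miss d t then f \<tau> else 0) = (\<Sum>t\<in>{t\<in>{1..T}. \<tau> \<in> miss d t}. f \<tau>)"
      using sum.inter_filter[of "{1..T}" "\<lambda>_. f \<tau>" "\<lambda>t. \<tau> \<in> miss d t"] by simp
    also have "\<dots> = real (card {t\<in>{1..T}. \<tau> \<in> miss d t}) * f \<tau>" by simp
    also have "\<dots> \<le> real dm * f \<tau>"
    proof (rule mult_right_mono)
      have "{t\<in>{1..T}. \<tau> \<in> miss d t} \<subseteq> {\<tau><..\<tau> + d \<tau>}" using miss_iff by auto
      then have "card {t\<in>{1..T}. \<tau> \<in> miss d t} \<le> card {\<tau><..\<tau> + d \<tau>}" by (intro card_mono) auto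
      also have "\<dots> = d \<tau>" by simp
      also have "\<dots> \<le> dm" using d_le tau by simp
      finally show "real (card {t\<in>{1..T}. \<tau> \<in> miss d t}) \<le> real dm" by simp
    qed (use f0 tau in auto)
    finally show "(\<Sum>t=1..T. if \<tau> \<in> miss d t then f \<tau> else 0) \<le> real dm * f \<tau>" .
  qed
  also have "\<dots> = real dm * (\<Sum>\<tau>=1..T. f \<tau>)" by (simp add: sum_distrib_left)
  finally show ?thesis .
qed

lemma diff_eq:
  assumes t: "t \<in> {1..T}"
  shows "pl t - ps t = - (\<Sum>\<tau>\<in>miss d t. y \<tau> * Bf n (eta t) z {1..t} (vv t \<tau>) (vv t t))"
proof -
  have tT: "t \<le> T" using t by simp
  have e: "0 < eta t" using eta_pos tT by simp
  let ?B = "Bf n (eta t) z {1..t}"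
  let ?v = "vv t t"
  have sv: "\<And>s. solves n (eta t) z {1..t} (z s) (vv t s)" unfolding vv_def using sol[OF _ e] by simp
  have sb: "solves n (eta t) z {1..t} (bvec t) (sol n (eta t) z {1..t} (bvec t))" using sol[OF _ e] by simp
  have sx: "solves n (eta t) z {1..t} (cvec (t-1)) (xs t)" unfolding xs_def using sol[OF _ e] by simp
  have zv: "vinner n (z s) ?v = ?B (vv t s) ?v" for s using sv[of s] unfolding solves_def by simp
  have "pl t = ?B ?v (sol n (eta t) z {1..t} (bvec t))" unfolding pl_def using sv[of t] unfolding solves_def by simp
  also have "\<dots> = vinner n (bvec t) ?v" using sb unfolding solves_def by (metis Bf_sym)
  also have "\<dots> = (\<Sum>\<tau>\<in>obs d t. y \<tau> * ?B (vv t \<tau>) ?v)" unfolding vinner_bvec zv ..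
  finally have h1: "pl t = (\<Sum>\<tau>\<in>obs d t. y \<tau> * ?B (vv t \<tau>) ?v)" .
  have "ps t = ?B ?v (xs t)" unfolding ps_def using sv[of t] unfolding solves_def by simp
  also have "\<dots> = vinner n (cvec (t-1)) ?v" using sx unfolding solves_def by (metis Bf_sym)
  also have "\<dots> = (\<Sum>\<tau>=1..t-1. y \<tau> * ?B (vv t \<tau>) ?v)" unfolding vinner_cvec zv ..
  also have "\<dots> = (\<Sum>\<tau>\<in>miss d t. y \<tau> * ?B (vv t \<tau>) ?v) + (\<Sum>\<tau>\<in>obs d t. y \<tau> * ?B (vv t \<tau>) ?v)"
    unfolding miss_def using obs_sub by (intro sum.subset_diff) auto
  finally show ?thesis using h1 by simp
qed

lemma cross_bounds:
  assumes t: "t \<in> {1..T}" and tau: "\<tau> \<in> miss d t"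
  shows "2 * \<bar>Bf n (eta t) z {1..t} (vv t \<tau>) (vv t t)\<bar> \<le> w \<tau> + w t"
    "2 * \<bar>Bf n (eta t) z {1..t} (vv t \<tau>) (vv t t)\<bar> \<le> 2 * Z^2 / eta t"
proof -
  have tT: "t \<le> T" using t by simp
  have e: "0 < eta t" using eta_pos tT by simp
  have tau1: "\<tau> \<in> {1..T}" "\<tau> \<le> t" using tau t miss_iff by auto
  have et: "0 < eta \<tau>" using eta_pos tau1 by simp
  have sv: "\<And>s. solves n (eta t) z {1..t} (z s) (vv t s)" unfolding vv_def using sol[OF _ e] by simp
  have a: "2 * \<bar>Bf n (eta t) z {1..t} (vv t \<tau>) (vv t t)\<bar> \<le> wv n (eta t) z {1..t} (z \<tau>) + w t"
    using Bf_abs_le[of "eta t" n z "{1..t}" "vv t \<tau>" "vv t t"] e wv_eq_Bf[OF _ e sv] unfolding w_def by simp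
  have b: "wv n (eta t) z {1..t} (z \<tau>) \<le> w \<tau>" unfolding w_def
    using eta_mono[of \<tau> t] tau1 tT et by (intro wv_mono) auto
  have c: "wv n (eta t) z {1..t} (z s) \<le> Z^2 / eta t" if "s \<in> {1..T}" for s
  proof -
    have "wv n (eta t) z {1..t} (z s) \<le> vinner n (z s) (z s) / eta t" using wv_le_norm e by simp
    also have "\<dots> \<le> Z^2 / eta t" using zz[OF that] e by (simp add: divide_right_mono)
    finally show ?thesis .
  qed
  show "2 * \<bar>Bf n (eta t) z {1..t} (vv t \<tau>) (vv t t)\<bar> \<le> w \<tau> + w t" using a b by simp
  show "2 * \<bar>Bf n (eta t) z {1..t} (vv t \<tau>) (vv t t)\<bar> \<le> 2 * Z^2 / eta t"
    using a c[OF tau1(1)] c[OF t] unfolding w_def by simp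
qed

definition aa :: "nat \<Rightarrow> real" where "aa t = \<bar>pl t - ps t\<bar>"

lemma aa_bounds:
  assumes t: "t \<in> {1..T}"
  shows "aa t \<le> Y * (\<Sum>\<tau>\<in>miss d t. (w \<tau> + w t) / 2)"
    "aa t \<le> Y * Z^2 * real (card (miss d t)) / eta t"
proof -
  let ?B = "\<lambda>\<tau>. Bf n (eta t) z {1..t} (vv t \<tau>) (vv t t)"
  have "aa t = \<bar>\<Sum>\<tau>\<in>miss d t. y \<tau> * ?B \<tau>\<bar>" unfolding aa_def diff_eq[OF t] by simp
  also have "\<dots> \<le> (\<Sum>\<tau>\<in>miss d t. \<bar>y \<tau> * ?B \<tau>\<bar>)" by (rule sum_abs)
  also have "\<dots> \<le> (\<Sum>\<tau>\<in>miss d t. Y * \<bar>?B \<tau>\<bar>)"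
  proof (intro sum_mono)
    fix \<tau> assume "\<tau> \<in> miss d t"
    then have "\<tau> \<in> {1..T}" using t miss_iff by auto
    then have "\<bar>y \<tau>\<bar> \<le> Y" using yY by simp
    then show "\<bar>y \<tau> * ?B \<tau>\<bar> \<le> Y * \<bar>?B \<tau>\<bar>" unfolding abs_mult by (intro mult_right_mono) auto
  qed
  finally have h: "aa t \<le> Y * (\<Sum>\<tau>\<in>miss d t. \<bar>?B \<tau>\<bar>)" by (simp add: sum_distrib_left)
  have "(\<Sum>\<tau>\<in>miss d t. \<bar>?B \<tau>\<bar>) \<le> (\<Sum>\<tau>\<in>miss d t. (w \<tau> + w t) / 2)"
    using cross_bounds(1)[OF t] by (intro sum_mono) fastforce
  then show "aa t \<le> Y * (\<Sum>\<tau>\<in>miss d t. (w \<tau> + w t) / 2)" using h Y0 by (meson mult_left_mono order_trans)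
  have "(\<Sum>\<tau>\<in>miss d t. \<bar>?B \<tau>\<bar>) \<le> (\<Sum>\<tau>\<in>miss d t. Z^2 / eta t)"
    using cross_bounds(2)[OF t] by (intro sum_mono) fastforce
  also have "\<dots> = Z^2 * real (card (miss d t)) / eta t" by simp
  finally have "Y * (\<Sum>\<tau>\<in>miss d t. \<bar>?B \<tau>\<bar>) \<le> Y * (Z^2 * real (card (miss d t)) / eta t)"
    using Y0 by (intro mult_left_mono)
  moreover have "Y * (Z^2 * real (card (miss d t)) / eta t) = Y * Z^2 * real (card (miss d t)) / eta t" by simp
  ultimately show "aa t \<le> Y * Z^2 * real (card (miss d t)) / eta t" using h by linarith
qed

lemma aa_sum1: "(\<Sum>t=1..T. aa t) \<le> Y * (real dm * Lg)"
proof -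
  have "(\<Sum>t=1..T. aa t) \<le> (\<Sum>t=1..T. Y * (\<Sum>\<tau>\<in>miss d t. (w \<tau> + w t) / 2))"
    using aa_bounds(1) by (intro sum_mono) auto
  also have "\<dots> = Y / 2 * ((\<Sum>t=1..T. \<Sum>\<tau>\<in>miss d t. w \<tau>) + (\<Sum>t=1..T. real (card (miss d t)) * w t))"
    by (simp add: sum_distrib_left sum.distrib add_divide_distrib algebra_simps sum_divide_distrib[symmetric])
  also have "\<dots> \<le> Y / 2 * (real dm * (\<Sum>t=1..T. w t) + real dm * (\<Sum>t=1..T. w t))"
  proof (intro mult_left_mono add_mono)
    show "(\<Sum>t=1..T. \<Sum>\<tau>\<in>miss d t. w \<tau>) \<le> real dm * (\<Sum>t=1..T. w t)"
      using double_sum[of w] w_nonneg by simp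
    have "(\<Sum>t=1..T. real (card (miss d t)) * w t) \<le> (\<Sum>t=1..T. real dm * w t)"
      using card_miss_dm w_nonneg by (intro sum_mono mult_right_mono) auto
    then show "(\<Sum>t=1..T. real (card (miss d t)) * w t) \<le> real dm * (\<Sum>t=1..T. w t)"
      by (simp add: sum_distrib_left)
  qed (use Y0 in simp)
  also have "\<dots> = Y * (real dm * (\<Sum>t=1..T. w t))" by (simp add: algebra_simps)
  also have "\<dots> \<le> Y * (real dm * Lg)" using w_sum Y0 by (intro mult_left_mono) auto
  finally show ?thesis .
qed

lemma aa_sum2: "(\<Sum>t=1..T. aa t) \<le> Y * (Z^2 * (\<Sum>t=1..T. real (card (miss d t)) / eta t))"
proof -
  have "(\<Sum>t=1..T. aa t) \<le> (\<Sum>t=1..T. Y * Z^2 * real (card (miss d t)) / eta t)"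
    using aa_bounds(2) by (intro sum_mono) auto
  also have "\<dots> = Y * (Z^2 * (\<Sum>t=1..T. real (card (miss d t)) / eta t))"
    by (simp add: sum_distrib_left mult.assoc)
  finally show ?thesis .
qed

lemma R_sum: "(\<Sum>t=1..T. max 0 ((y t)^2 - (rho y d t)^2)) \<le> real (sg + 1) * Y^2"
proof (rule topk)
  show "1 \<le> sg + 1" by simp
  show "0 \<le> Y^2" by simp
  show "finite (miss d t) \<and> card (miss d t) < sg + 1" if "t \<in> {1..T}" for t
    using miss_fin card_miss_sg[OF that] by simp
  show "(y s)^2 \<le> (rho y d t)^2" if "t \<in> {1..T}" "s \<in> {1..t-1} - miss d t" for t s
  proof -
    have "s \<in> obs d t" using that(2) unfolding miss_def by auto
    then have "\<bar>y s\<bar> \<le> rho y d t" by (rule rho_ge)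
    then show ?thesis using abs_ge_zero power_mono by (metis power2_abs)
  qed
  show "0 \<le> (rho y d t)^2" for t by simp
  show "(y s)^2 \<le> Y^2" if "s \<in> {1..T}" for s
    using yY that by (metis abs_ge_zero power2_abs power_mono)
qed

end

context setting begin

lemma rho_le_gen: "(\<And>s. s \<in> obs d t \<Longrightarrow> \<bar>y s\<bar> \<le> Y) \<Longrightarrow> rho y d t \<le> Y"
proof (cases "obs d t = {}")
  case False
  assume h: "\<And>s. s \<in> obs d t \<Longrightarrow> \<bar>y s\<bar> \<le> Y"
  have "Max ((\<lambda>\<tau>. \<bar>y \<tau>\<bar>) ` obs d t) \<in> (\<lambda>\<tau>. \<bar>y \<tau>\<bar>) ` obs d t" using obs_fin False by (intro Max_in) auto
  then obtain s where s1: "s \<in> obs d t" and s2: "Max ((\<lambda>\<tau>. \<bar>y \<tau>\<bar>) ` obs d t) = \<bar>y s\<bar>" by blast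
  have "rho y d t = \<bar>y s\<bar>" unfolding rho_def using False s2 by simp
  then show ?thesis using h[OF s1] by simp
qed (simp add: rho_def Y0)

lemma rho_mono_set: "obs d t \<subseteq> obs d t' \<Longrightarrow> rho y d t \<le> rho y d t'"
proof (cases "obs d t = {}")
  case True
  then show ?thesis using rho_nonneg by (simp add: rho_def)
next
  case False
  assume sub: "obs d t \<subseteq> obs d t'"
  have "Max ((\<lambda>\<tau>. \<bar>y \<tau>\<bar>) ` obs d t) \<in> (\<lambda>\<tau>. \<bar>y \<tau>\<bar>) ` obs d t" using obs_fin False by (intro Max_in) auto
  then obtain s where s1: "s \<in> obs d t" and s2: "Max ((\<lambda>\<tau>. \<bar>y \<tau>\<bar>) ` obs d t) = \<bar>y s\<bar>" by blast
  have "rho y d t = \<bar>y s\<bar>" unfolding rho_def using False s2 by simp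
  also have "\<dots> \<le> rho y d t'" using rho_ge sub s1 by blast
  finally show ?thesis .
qed

lemma regret_decomp:
  "regret n T z y d eta u \<le> eta T / 2 * (vnorm n u)^2 + Y^2 * Lg / 2
     + (\<Sum>t=1..T. (clip (rho y d t) (pl t) - y t)^2 - (ps t - y t)^2) / 2"
proof -
  have "regret n T z y d eta u = (\<Sum>t=1..T. ((clip (rho y d t) (pl t) - y t)^2 - (ps t - y t)^2) / 2)
      + ((\<Sum>t=1..T. (ps t - y t)^2 / 2) - (\<Sum>t=1..T. (vinner n (z t) u - y t)^2 / 2))"
    unfolding regret_eq by (simp add: sum_subtractf[symmetric] sum.distrib[symmetric] diff_divide_distrib)
  also have "(\<Sum>t=1..T. ((clip (rho y d t) (pl t) - y t)^2 - (ps t - y t)^2) / 2)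
     = (\<Sum>t=1..T. (clip (rho y d t) (pl t) - y t)^2 - (ps t - y t)^2) / 2"
    by (simp add: sum_divide_distrib)
  also have "(\<Sum>t=1..T. (y t)^2 * w t / 2) \<le> Y^2 * Lg / 2"
  proof -
    have "(\<Sum>t=1..T. (y t)^2 * w t / 2) \<le> (\<Sum>t=1..T. Y^2 * w t / 2)"
    proof (intro sum_mono divide_right_mono mult_right_mono)
      fix t assume t: "t \<in> {1..T}"
      show "(y t)^2 \<le> Y^2" using yY t by (metis abs_ge_zero power2_abs power_mono)
      show "0 \<le> w t" using w_nonneg t by simp
    qed simp
    also have "\<dots> = Y^2 / 2 * (\<Sum>t=1..T. w t)" by (simp add: sum_distrib_left)
    also have "\<dots> \<le> Y^2 / 2 * Lg" using w_sum by (intro mult_left_mono) auto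
    finally show ?thesis by simp
  qed
  then have "(\<Sum>t=1..T. (ps t - y t)^2 / 2) - (\<Sum>t=1..T. (vinner n (z t) u - y t)^2 / 2)
      \<le> eta T / 2 * (vnorm n u)^2 + Y^2 * Lg / 2" using vaw_total[of u] by linarith
  finally show ?thesis by simp
qed

lemma case_pos:
  assumes "1 \<le> sg"
  shows "(\<Sum>t=1..T. (clip (rho y d t) (pl t) - y t)^2 - (ps t - y t)^2)
     \<le> 5 * Y^2 * min (real dm * Lg) (Z^2 * (\<Sum>t=1..T. real (card (miss d t)) / eta t)) + real (sg + 1) * Y^2"
proof -
  have "(\<Sum>t=1..T. (clip (rho y d t) (pl t) - y t)^2 - (ps t - y t)^2)
      \<le> (\<Sum>t=1..T. 5 * Y * aa t + max 0 ((y t)^2 - (rho y d t)^2))"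
  proof (intro sum_mono)
    fix t assume t: "t \<in> {1..T}"
    show "(clip (rho y d t) (pl t) - y t)^2 - (ps t - y t)^2 \<le> 5 * Y * aa t + max 0 ((y t)^2 - (rho y d t)^2)"
      using clip_gen[of "rho y d t" Y "y t" "aa t" "pl t" "ps t"] rho_nonneg[of t] rho_le[of t] yY t unfolding aa_def by simp
  qed
  also have "\<dots> = 5 * Y * (\<Sum>t=1..T. aa t) + (\<Sum>t=1..T. max 0 ((y t)^2 - (rho y d t)^2))"
    by (simp add: sum.distrib sum_distrib_left)
  also have "\<dots> \<le> 5 * Y * (Y * min (real dm * Lg) (Z^2 * (\<Sum>t=1..T. real (card (miss d t)) / eta t)))
      + real (sg + 1) * Y^2"
  proof (intro add_mono mult_left_mono R_sum)
    have "(\<Sum>t=1..T. aa t) \<le> Y * (real dm * Lg)" by (rule aa_sum1)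
    moreover have "(\<Sum>t=1..T. aa t) \<le> Y * (Z^2 * (\<Sum>t=1..T. real (card (miss d t)) / eta t))" by (rule aa_sum2)
    ultimately show "(\<Sum>t=1..T. aa t) \<le> Y * min (real dm * Lg) (Z^2 * (\<Sum>t=1..T. real (card (miss d t)) / eta t))"
      by (simp add: min_mult_distrib_left Y0)
  qed (use Y0 in simp)
  finally show ?thesis by (simp add: power2_eq_square algebra_simps)
qed

end

context setting begin

lemma obs_full:
  assumes sg0: "sg = 0" and t: "t \<in> {1..Suc T}"
  shows "obs d t = {1..t-1}"
proof (cases "t \<le> T")
  case True
  then have tt: "t \<in> {1..T}" using t by simp
  have "card (miss d t) = 0" using card_miss_sg[OF tt] sg0 by simp
  then have "miss d t = {}" using miss_fin by simp
  then show ?thesis using obs_sub unfolding miss_def by blast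
next
  case False
  then have tT: "t = Suc T" using t by simp
  have "{1..T} \<subseteq> obs d t"
  proof
    fix \<tau> assume tau: "\<tau> \<in> {1..T}"
    then have "\<tau> + d \<tau> \<le> T" using dT by blast
    then show "\<tau> \<in> obs d t" using tau tT unfolding obs_def by simp
  qed
  then show ?thesis using obs_sub[of t] tT by auto
qed

lemma ps_bound:
  assumes t: "t \<in> {1..T}" and ob: "obs d t = {1..t-1}"
  shows "\<bar>ps t\<bar> \<le> rho y d t * sqrt (Z^2 * real T / eta 0)"
proof -
  have tT: "t \<le> T" using t by simp
  have e: "0 < eta t" using eta_pos tT by simp
  let ?B = "Bf n (eta t) z {1..t}"
  let ?x = "xs t" and ?v = "vv t t" and ?r = "rho y d t"
  have sx: "solves n (eta t) z {1..t} (cvec (t-1)) ?x" unfolding xs_def using sol[OF _ e] by simp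
  have sv: "solves n (eta t) z {1..t} (z t) ?v" unfolding vv_def using sol[OF _ e] by simp
  define P where "P = ?B ?x ?x"
  define q where "q \<tau> = vinner n (z \<tau>) ?x" for \<tau>
  have P0: "0 \<le> P" unfolding P_def using Bf_self_nonneg e by simp
  have Pq: "P = (\<Sum>\<tau>=1..t-1. y \<tau> * q \<tau>)" unfolding P_def solves_self[OF sx] vinner_cvec q_def ..
  have qP: "(\<Sum>\<tau>=1..t-1. (q \<tau>)^2) \<le> P"
  proof -
    have "(\<Sum>\<tau>=1..t-1. (q \<tau>)^2) \<le> (\<Sum>\<tau>=1..t. (q \<tau>)^2)" by (intro sum_mono2) auto
    also have "\<dots> \<le> P" unfolding P_def Bf_def q_def using e vinner_self_nonneg
      by (simp add: power2_eq_square)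
    finally show ?thesis .
  qed
  have "P \<le> (\<Sum>\<tau>=1..t-1. (?r^2 + (q \<tau>)^2) / 2)"
    unfolding Pq
  proof (intro sum_mono)
    fix \<tau> assume "\<tau> \<in> {1..t-1}"
    then have "\<tau> \<in> obs d t" using ob by simp
    then have yr: "\<bar>y \<tau>\<bar> \<le> ?r" by (rule rho_ge)
    have "(y \<tau>)^2 \<le> ?r^2" using yr by (metis abs_ge_zero power2_abs power_mono)
    moreover have "2 * (y \<tau> * q \<tau>) \<le> (y \<tau>)^2 + (q \<tau>)^2"
      using sum_squares_bound[of "y \<tau>" "q \<tau>"] by (simp add: power2_eq_square)
    ultimately show "y \<tau> * q \<tau> \<le> (?r^2 + (q \<tau>)^2) / 2" by simp
  qed
  also have "\<dots> = (real (t - 1) * ?r^2 + (\<Sum>\<tau>=1..t-1. (q \<tau>)^2)) / 2"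
    by (simp add: sum.distrib sum_divide_distrib[symmetric])
  finally have "P \<le> (real (t - 1) * ?r^2 + P) / 2" using qP by simp
  then have "P \<le> real (t - 1) * ?r^2" by simp
  also have "\<dots> \<le> real T * ?r^2" using tT by (intro mult_right_mono) auto
  finally have PT: "P \<le> real T * ?r^2" .
  have w0: "0 \<le> w t" using w_nonneg tT by simp
  have wZ: "w t \<le> Z^2 / eta 0"
  proof -
    have "w t \<le> vinner n (z t) (z t) / eta t" unfolding w_def using wv_le_norm e by simp
    also have "\<dots> \<le> Z^2 / eta t" using zz[OF t] e by (simp add: divide_right_mono)
    also have "\<dots> \<le> Z^2 / eta 0" using eta_mono[of 0 t] tT eta0 by (intro divide_left_mono) auto
    finally show ?thesis .
  qed
  have "ps t = ?B ?v ?x" unfolding ps_def using sv unfolding solves_def by simp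
  then have "(ps t)^2 \<le> ?B ?v ?v * P" unfolding P_def using Bf_CS e by simp
  also have "?B ?v ?v = w t" unfolding w_def using wv_eq_Bf[OF _ e sv] by simp
  also have "w t * P \<le> (Z^2 / eta 0) * (real T * ?r^2)" using wZ PT w0 P0 by (intro mult_mono) auto
  also have "\<dots> = (Z^2 * real T / eta 0) * ?r^2" by simp
  finally have "sqrt ((ps t)^2) \<le> sqrt ((Z^2 * real T / eta 0) * ?r^2)" by (rule real_sqrt_le_mono)
  moreover have "sqrt ((Z^2 * real T / eta 0) * ?r^2) = ?r * sqrt (Z^2 * real T / eta 0)"
    unfolding real_sqrt_mult using rho_nonneg[of t] by simp
  moreover have "sqrt ((ps t)^2) = \<bar>ps t\<bar>" by simp
  ultimately show ?thesis by simp
qed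

lemma case_zero:
  assumes sg0: "sg = 0"
  shows "(\<Sum>t=1..T. (clip (rho y d t) (pl t) - y t)^2 - (ps t - y t)^2) \<le> Y^2 * Lg"
proof -
  define x where "x = Z^2 * real T / eta 0"
  have x0: "0 \<le> x" unfolding x_def using eta0 by simp
  define m where "m = max 0 (sqrt x - 1)"
  have m0: "0 \<le> m" unfolding m_def by simp
  define R where "R t = max 0 (\<bar>y t\<bar> - rho y d t)" for t
  have R0: "0 \<le> R t" for t unfolding R_def by simp
  have RY: "R t \<le> Y" if "t \<in> {1..T}" for t
  proof -
    have "\<bar>y t\<bar> \<le> Y" using yY that by simp
    then show ?thesis unfolding R_def using rho_nonneg[of t] Y0 by simp
  qed
  have ob: "obs d t = {1..t-1}" if "t \<in> {1..T}" for t using obs_full[OF sg0] that by simp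
  have obS: "obs d (Suc t) = {1..t}" if "t \<in> {1..T}" for t using obs_full[OF sg0, of "Suc t"] that by simp
  have plps: "pl t = ps t" if "t \<in> {1..T}" for t
  proof -
    have "bvec t = cvec (t - 1)" unfolding bvec_def cvec_def ob[OF that] ..
    then show ?thesis unfolding pl_def ps_def xs_def by simp
  qed
  have Rsum: "(\<Sum>t=1..T. R t) \<le> Y"
  proof -
    have "(\<Sum>t=1..T. R t) \<le> (\<Sum>t=1..T. rho y d (Suc t) - rho y d t)"
    proof (intro sum_mono)
      fix t assume t: "t \<in> {1..T}"
      have "t \<in> obs d (Suc t)" using obS[OF t] t by simp
      then have "\<bar>y t\<bar> \<le> rho y d (Suc t)" by (rule rho_ge)
      moreover have "rho y d t \<le> rho y d (Suc t)" using ob[OF t] obS[OF t] by (intro rho_mono_set) auto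
      ultimately show "R t \<le> rho y d (Suc t) - rho y d t" unfolding R_def by simp
    qed
    also have "\<dots> = rho y d (Suc T) - rho y d 1" by (rule telescope2)
    also have "rho y d 1 = 0" unfolding rho_def obs_def by simp
    also have "rho y d (Suc T) \<le> Y"
    proof (rule rho_le_gen)
      fix s assume "s \<in> obs d (Suc T)"
      then have "s \<in> {1..T}" using obs_sub[of "Suc T"] by auto
      then show "\<bar>y s\<bar> \<le> Y" using yY by simp
    qed
    finally show ?thesis by simp
  qed
  have D1: "(clip (rho y d t) (pl t) - y t)^2 - (ps t - y t)^2 \<le> 2 * (Y * m) * R t"
    if t: "t \<in> {1..T}" for t
  proof -
    have "(clip (rho y d t) (pl t) - y t)^2 - (ps t - y t)^2 \<le> 2 * max 0 (\<bar>ps t\<bar> - rho y d t) * R t"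
      using clip0(1)[OF rho_nonneg, of t "ps t" "y t"] plps[OF t] unfolding R_def by simp
    also have "max 0 (\<bar>ps t\<bar> - rho y d t) \<le> Y * m"
    proof -
      have "\<bar>ps t\<bar> - rho y d t \<le> rho y d t * (sqrt x - 1)"
        using ps_bound[OF t ob[OF t]] unfolding x_def by (simp add: algebra_simps)
      also have "\<dots> \<le> rho y d t * m" unfolding m_def using rho_nonneg[of t] by (intro mult_left_mono) auto
      also have "\<dots> \<le> Y * m" using rho_le[of t] t m0 by (intro mult_right_mono) auto
      finally show ?thesis using m0 Y0 by simp
    qed
    then have "2 * max 0 (\<bar>ps t\<bar> - rho y d t) * R t \<le> 2 * (Y * m) * R t" using R0 by (intro mult_right_mono) auto
    finally show ?thesis .
  qed
  have D2: "(clip (rho y d t) (pl t) - y t)^2 - (ps t - y t)^2 \<le> Y * R t"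
    if t: "t \<in> {1..T}" for t
  proof -
    have "(clip (rho y d t) (pl t) - y t)^2 - (ps t - y t)^2 \<le> (R t)^2"
      using clip0(2)[OF rho_nonneg, of t "ps t" "y t"] plps[OF t] unfolding R_def by simp
    also have "\<dots> \<le> Y * R t" unfolding power2_eq_square using RY[OF t] R0 by (intro mult_right_mono) auto
    finally show ?thesis .
  qed
  let ?S = "(\<Sum>t=1..T. (clip (rho y d t) (pl t) - y t)^2 - (ps t - y t)^2)"
  have S1: "?S \<le> Y^2 * (2 * m)"
  proof -
    have "?S \<le> (\<Sum>t=1..T. 2 * (Y * m) * R t)" using D1 by (intro sum_mono) auto
    also have "\<dots> = 2 * (Y * m) * (\<Sum>t=1..T. R t)" by (simp add: sum_distrib_left)
    also have "\<dots> \<le> 2 * (Y * m) * Y" using Rsum Y0 m0 by (intro mult_left_mono) auto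
    finally show ?thesis by (simp add: power2_eq_square algebra_simps)
  qed
  have S2: "?S \<le> Y^2 * (2 * (1/2))"
  proof -
    have "?S \<le> (\<Sum>t=1..T. Y * R t)" using D2 by (intro sum_mono) auto
    also have "\<dots> = Y * (\<Sum>t=1..T. R t)" by (simp add: sum_distrib_left)
    also have "\<dots> \<le> Y * Y" using Rsum Y0 by (intro mult_left_mono) auto
    finally show ?thesis by (simp add: power2_eq_square)
  qed
  have "?S \<le> Y^2 * (2 * min m (1/2))"
    using S1 S2 by (cases "m \<le> 1/2") (auto simp: min_def)
  also have "\<dots> \<le> Y^2 * ln (1 + x)" unfolding m_def using ln_final[OF x0] by (intro mult_left_mono) auto
  also have "\<dots> \<le> Y^2 * Lg"
  proof (intro mult_left_mono)
    have "ln (1 + x) \<le> real n * ln (1 + x / real n)" by (rule ln_bernoulli[OF n1 x0])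
    also have "x / real n = Z^2 * real T / (eta 0 * real n)" unfolding x_def by simp
    finally show "ln (1 + x) \<le> Lg" unfolding Lg_def .
  qed simp
  finally show ?thesis .
qed

lemma main:
  "regret n T z y d eta u \<le> eta T / 2 * (vnorm n u)^2
     + real n * Y^2 * ln (1 + Z^2 * real T / (eta 0 * real n))
     + 3 * Y^2 * (real sg + min (real n * real dm * ln (1 + Z^2 * real T / (eta 0 * real n)))
                      (Z^2 * (\<Sum>t=1..T. real (card (miss d t)) / eta t)))"
proof -
  let ?M = "min (real n * real dm * ln (1 + Z^2 * real T / (eta 0 * real n))) (Z^2 * (\<Sum>t=1..T. real (card (miss d t)) / eta t))"
  have M: "?M = min (real dm * Lg) (Z^2 * (\<Sum>t=1..T. real (card (miss d t)) / eta t))"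
    unfolding Lg_def by (simp add: mult.commute mult.left_commute)
  have M0: "0 \<le> ?M"
  proof -
    have "0 \<le> real dm * Lg" using Lg_nonneg by simp
    moreover have "0 \<le> Z^2 * (\<Sum>t=1..T. real (card (miss d t)) / eta t)"
      using eta_pos by (intro mult_nonneg_nonneg sum_nonneg divide_nonneg_nonneg) (auto intro: less_imp_le)
    ultimately show ?thesis unfolding M by simp
  qed
  have LL: "real n * Y^2 * ln (1 + Z^2 * real T / (eta 0 * real n)) = Y^2 * Lg" unfolding Lg_def by simp
  have Y2: "0 \<le> Y^2" by simp
  show ?thesis
  proof (cases "sg = 0")
    case True
    have "regret n T z y d eta u \<le> eta T / 2 * (vnorm n u)^2 + Y^2 * Lg / 2 + Y^2 * Lg / 2"
      using regret_decomp[of u] case_zero[OF True] by linarith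
    moreover have "0 \<le> 3 * Y^2 * (real sg + ?M)" using M0 by simp
    ultimately show ?thesis unfolding LL by linarith
  next
    case False
    then have s1: "1 \<le> sg" by simp
    have "regret n T z y d eta u \<le> eta T / 2 * (vnorm n u)^2 + Y^2 * Lg / 2
       + (5 * Y^2 * ?M + real (sg + 1) * Y^2) / 2"
    proof -
      have "(\<Sum>t=1..T. (clip (rho y d t) (pl t) - y t)^2 - (ps t - y t)^2) / 2
          \<le> (5 * Y^2 * ?M + real (sg + 1) * Y^2) / 2"
        using case_pos[OF s1] unfolding M[symmetric] by (rule divide_right_mono) simp
      then show ?thesis using regret_decomp[of u] by linarith
    qed
    moreover have "Y^2 * Lg / 2 \<le> Y^2 * Lg" using Lg_nonneg by simp
    moreover have "(5 * Y^2 * ?M + real (sg + 1) * Y^2) / 2 \<le> 3 * Y^2 * (real sg + ?M)"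
    proof -
      have A: "Y^2 \<le> Y^2 * real sg" using s1 mult_left_mono[of 1 "real sg" "Y^2"] by simp
      have B: "0 \<le> Y^2 * ?M" using M0 by simp
      have C: "0 \<le> Y^2 * real sg" by simp
      have l: "(5 * Y^2 * ?M + real (sg + 1) * Y^2) / 2 = (5 * (Y^2 * ?M) + Y^2 * real sg + Y^2) / 2"
        by (simp add: algebra_simps)
      have r: "3 * Y^2 * (real sg + ?M) = 3 * (Y^2 * real sg) + 3 * (Y^2 * ?M)"
        by (simp add: algebra_simps)
      have g: "(5 * b + a + c) / 2 \<le> 3 * a + 3 * b"
        if "c \<le> a" "0 \<le> b" "0 \<le> a" for a b c :: real using that by (simp add: field_simps)
      show ?thesis unfolding l r using g[OF A B C] by simp
    qed
    ultimately show ?thesis unfolding LL by linarith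
  qed
qed

end

theorem theorem5p2:
  shows "\<exists>C::real. \<forall>(n::nat) (T::nat) (z::nat \<Rightarrow> nat \<Rightarrow> real) (y::nat \<Rightarrow> real)
      (d::nat \<Rightarrow> nat) (\<eta>::nat \<Rightarrow> real) (Y::real) (Z::real) (u::nat \<Rightarrow> real).
    1 \<le> T \<longrightarrow> 1 \<le> n \<longrightarrow>
    (\<forall>t\<in>{1..T}. t + d t \<le> T) \<longrightarrow>
    0 \<le> Y \<longrightarrow> 0 \<le> Z \<longrightarrow>
    (\<forall>t\<in>{1..T}. vnorm n (z t) \<le> Z) \<longrightarrow>
    (\<forall>t\<in>{1..T}. \<bar>y t\<bar> \<le> Y) \<longrightarrow>
    0 < \<eta> 0 \<longrightarrow> (\<forall>t<T. \<eta> t \<le> \<eta> (Suc t)) \<longrightarrow>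
    regret n T z y d \<eta> u
      \<le> \<eta> T / 2 * (vnorm n u)\<^sup>2
        + real n * Y\<^sup>2 * ln (1 + Z\<^sup>2 * real T / (\<eta> 0 * real n))
        + C * Y\<^sup>2 * (real (sigma_max T d)
             + min (real n * real (d_max T d) * ln (1 + Z\<^sup>2 * real T / (\<eta> 0 * real n)))
                   (Z\<^sup>2 * (\<Sum>t=1..T. real (card (miss d t)) / \<eta> t)))"
proof (intro exI[of _ 3] allI impI)
  fix n T :: nat and z :: "nat \<Rightarrow> nat \<Rightarrow> real" and y :: "nat \<Rightarrow> real" and d :: "nat \<Rightarrow> nat"
    and \<eta> :: "nat \<Rightarrow> real" and Y Z :: real and u :: "nat \<Rightarrow> real"
  assume "1 \<le> T" "1 \<le> n" "\<forall>t\<in>{1..T}. t + d t \<le> T" "0 \<le> Y" "0 \<le> Z"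
    "\<forall>t\<in>{1..T}. vnorm n (z t) \<le> Z" "\<forall>t\<in>{1..T}. \<bar>y t\<bar> \<le> Y" "0 < \<eta> 0" "\<forall>t<T. \<eta> t \<le> \<eta> (Suc t)"
  then interpret setting n T z y d \<eta> Y Z by unfold_locales
  show "regret n T z y d \<eta> u
      \<le> \<eta> T / 2 * (vnorm n u)\<^sup>2
        + real n * Y\<^sup>2 * ln (1 + Z\<^sup>2 * real T / (\<eta> 0 * real n))
        + 3 * Y\<^sup>2 * (real (sigma_max T d)
             + min (real n * real (d_max T d) * ln (1 + Z\<^sup>2 * real T / (\<eta> 0 * real n)))
                   (Z\<^sup>2 * (\<Sum>t=1..T. real (card (miss d t)) / \<eta> t)))"
    by (rule main)
qed


end
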